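(* Let $p$ be a prime, $d\geq 2$, and $R=\mathbb{Z}_p[[\zeta_1,\ldots,\zeta_d]]$. For $1\leq i<d$ let $\mathcal{X}_i$ be a subset of $\mathcal{B}_i(R)$ such that $(\mathcal{X}_1,\ldots,\mathcal{X}_{d-1})$ is a rich sequence. Then for each $1\leq i<d$, $$D_i:=\bigcap_{(\zeta_1',\ldots,\zeta_i')\in\mathcal{X}_i}(\zeta_1'R+\cdots+\zeta_i'R)=0.$$
   Context: A tuple $(\zeta_1',\ldots,\zeta_d')$ of elements of $R$ is called a base for $R$ if $R=\mathbb{Z}_p[[\zeta_1',\ldots,\zeta_d']]$, i.e. the $\zeta_j'$ lie in the maximal ideal and the continuous $\mathbb{Z}_p$-algebra homomorphism from the power series ring in $d$ variables sending the variables to $\zeta_1',\ldots,\zeta_d'$ is an isomorphism onto $R$. $\mathcal{B}(R)$ is the set of all bases, and for $i<d$, $\mathcal{B}_i(R)$ is the set of $i$-tuples $(\zeta_1',\ldots,\zeta_i')$ that extend to some base $(\zeta_1',\ldots,\zeta_d')\in\mathcal{B}(R)$. A sequence $(\mathcal{X}_1,\ldots,\mathcal{X}_{d-1})$ with $\mathcal{X}_i\subseteq\mathcal{B}_i(R)$ is called rich if $\mathcal{X}_1$ contains infinitely many pairwise non-associate elements, and for each $1<i<d$ and each fixed $(\zeta_1',\ldots,\zeta_{i-1}')\in\mathcal{X}_{i-1}$ there are infinitely many distinct ideals of the form $\zeta_1'R+\cdots+\zeta_{i-1}'R+\zeta_i'R$ with $(\zeta_1',\ldots,\zeta_{i-1}',\zeta_i')\in\mathcal{X}_i$.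 *)

theory Defs
  imports Main "HOL-Computational_Algebra.Primes"
begin

text \<open>
A p-adic integer is represented by its compatible sequence of residues:
x n is the residue modulo p^n (in {0..<p^n}), with x (Suc n) mod p^n = x n.

An element of R is a function F from exponent vectors (lists of length d)
to p-adic integers; F alpha is the coefficient of the monomial zeta^alpha.
Off exponent vectors of length d, F is the zero function (canonical form).
\<close>

type_synonym padic = "nat \<Rightarrow> int"
type_synonym pser = "nat list \<Rightarrow> padic"

definition Zp :: "int \<Rightarrow> padic set" where
  "Zp p = {x. \<forall>n. 0 \<le> x n \<and> x n < p ^ n \<and> x (Suc n) mod p ^ n = x n}"

definition PS :: "int \<Rightarrow> nat \<Rightarrow> pser set" where
  "PS p d = {F. (\<forall>\<alpha>. length \<alpha> = d \<longrightarrow> F \<alpha> \<in> Zp p) \<and>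
                (\<forall>\<alpha>. length \<alpha> \<noteq> d \<longrightarrow> F \<alpha> = (\<lambda>n. 0))}"

definition ps_zero :: pser where
  "ps_zero = (\<lambda>\<alpha> n. 0)"

definition ps_one :: "int \<Rightarrow> nat \<Rightarrow> pser" where
  "ps_one p d = (\<lambda>\<alpha> n. if \<alpha> = replicate d 0 then 1 mod p ^ n else 0)"

definition ps_sum :: "int \<Rightarrow> 'i set \<Rightarrow> ('i \<Rightarrow> pser) \<Rightarrow> pser" where
  "ps_sum p A G = (\<lambda>\<gamma> n. (\<Sum>a\<in>A. G a \<gamma> n) mod p ^ n)"

definition ps_add :: "int \<Rightarrow> pser \<Rightarrow> pser \<Rightarrow> pser" where
  "ps_add p F G = (\<lambda>\<gamma> n. (F \<gamma> n + G \<gamma> n) mod p ^ n)"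

definition below :: "nat \<Rightarrow> nat list \<Rightarrow> nat list set" where
  "below d \<alpha> = {\<beta>. length \<beta> = d \<and> (\<forall>j<d. \<beta> ! j \<le> \<alpha> ! j)}"

definition ps_mul :: "int \<Rightarrow> nat \<Rightarrow> pser \<Rightarrow> pser \<Rightarrow> pser" where
  "ps_mul p d F G = (\<lambda>\<alpha> n. if length \<alpha> = d
      then (\<Sum>\<beta>\<in>below d \<alpha>. F \<beta> n * G (map2 (\<lambda>a b. a - b) \<alpha> \<beta>) n) mod p ^ n
      else 0)"

definition ps_smult :: "int \<Rightarrow> padic \<Rightarrow> pser \<Rightarrow> pser" where
  "ps_smult p c G = (\<lambda>\<gamma> n. (c n * G \<gamma> n) mod p ^ n)"

primrec ps_pow :: "int \<Rightarrow> nat \<Rightarrow> pser \<Rightarrow> nat \<Rightarrow> pser" where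
  "ps_pow p d F 0 = ps_one p d"
| "ps_pow p d F (Suc k) = ps_mul p d F (ps_pow p d F k)"

definition mon_prod :: "int \<Rightarrow> nat \<Rightarrow> pser list \<Rightarrow> nat list \<Rightarrow> pser" where
  "mon_prod p d Z \<alpha> =
     foldr (\<lambda>j acc. ps_mul p d (ps_pow p d (Z ! j) (\<alpha> ! j)) acc) [0..<d] (ps_one p d)"

definition mons_lt :: "nat \<Rightarrow> nat \<Rightarrow> nat list set" where
  "mons_lt d N = {\<alpha>. length \<alpha> = d \<and> sum_list \<alpha> < N}"

text \<open>Substitution F(Z_1,...,Z_d) = sum_alpha F_alpha Z^alpha, defined as the limit
  (coefficientwise and p-adically: every residue eventually stabilises) of the
  partial sums over monomials of total degree < N.  For Z in the maximal ideal this
  is the continuous Z_p-algebra homomorphism sending zeta_j to Z_j.\<close>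
definition subst :: "int \<Rightarrow> nat \<Rightarrow> pser \<Rightarrow> pser list \<Rightarrow> pser" where
  "subst p d F Z = (\<lambda>\<gamma> n. THE v. \<exists>N0. \<forall>N\<ge>N0.
      ps_sum p (mons_lt d N) (\<lambda>\<alpha>. ps_smult p (F \<alpha>) (mon_prod p d Z \<alpha>)) \<gamma> n = v)"

text \<open>Maximal ideal (p, zeta_1, ..., zeta_d): constant term divisible by p.\<close>
definition PSmax :: "int \<Rightarrow> nat \<Rightarrow> pser set" where
  "PSmax p d = {F \<in> PS p d. F (replicate d 0) 1 = 0}"

definition is_base :: "int \<Rightarrow> nat \<Rightarrow> pser list \<Rightarrow> bool" where
  "is_base p d Z \<longleftrightarrow> length Z = d \<and> set Z \<subseteq> PSmax p d \<and>
      bij_betw (\<lambda>F. subst p d F Z) (PS p d) (PS p d)"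

definition Bset :: "int \<Rightarrow> nat \<Rightarrow> pser list set" where
  "Bset p d = {Z. is_base p d Z}"

definition Bi :: "int \<Rightarrow> nat \<Rightarrow> nat \<Rightarrow> pser list set" where
  "Bi p d i = {Z. length Z = i \<and> (\<exists>W. is_base p d (Z @ W))}"

definition gen_ideal :: "int \<Rightarrow> nat \<Rightarrow> pser list \<Rightarrow> pser set" where
  "gen_ideal p d Z = {G. \<exists>A. (\<forall>j<length Z. A j \<in> PS p d) \<and>
      G = ps_sum p {..<length Z} (\<lambda>j. ps_mul p d (A j) (Z ! j))}"

definition ps_unit :: "int \<Rightarrow> nat \<Rightarrow> pser \<Rightarrow> bool" where
  "ps_unit p d u \<longleftrightarrow> u \<in> PS p d \<and> (\<exists>v\<in>PS p d. ps_mul p d u v = ps_one p d)"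

definition ps_associated :: "int \<Rightarrow> nat \<Rightarrow> pser \<Rightarrow> pser \<Rightarrow> bool" where
  "ps_associated p d a b \<longleftrightarrow> (\<exists>u. ps_unit p d u \<and> a = ps_mul p d u b)"

definition rich :: "int \<Rightarrow> nat \<Rightarrow> (nat \<Rightarrow> pser list set) \<Rightarrow> bool" where
  "rich p d X \<longleftrightarrow>
     (\<exists>S. infinite S \<and> S \<subseteq> {z. [z] \<in> X 1} \<and>
          (\<forall>a\<in>S. \<forall>b\<in>S. a \<noteq> b \<longrightarrow> \<not> ps_associated p d a b)) \<and>
     (\<forall>i. 1 < i \<and> i < d \<longrightarrow>
        (\<forall>t\<in>X (i - 1). infinite {gen_ideal p d (t @ [z]) | z. t @ [z] \<in> X i}))"

end

theory Submission
  imports Defs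
begin

definition lsub :: "nat list \<Rightarrow> nat list \<Rightarrow> nat list" where
  "lsub a b = map2 (\<lambda>x y. x - y) a b"
definition ladd :: "nat list \<Rightarrow> nat list \<Rightarrow> nat list" where
  "ladd a b = map2 (+) a b"

lemma length_lsub[simp]: "length (lsub a b) = min (length a) (length b)"
  by (simp add: lsub_def)
lemma length_ladd[simp]: "length (ladd a b) = min (length a) (length b)"
  by (simp add: ladd_def)
lemma nth_lsub[simp]: "i < length a \<Longrightarrow> i < length b \<Longrightarrow> lsub a b ! i = a ! i - b ! i"
  by (simp add: lsub_def)
lemma nth_ladd[simp]: "i < length a \<Longrightarrow> i < length b \<Longrightarrow> ladd a b ! i = a ! i + b ! i"
  by (simp add: ladd_def)

lemma below_iff: "b \<in> below d a \<longleftrightarrow> length b = d \<and> (\<forall>j<d. b ! j \<le> a ! j)"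
  by (simp add: below_def)

lemma finite_below: assumes "length a = d" shows "finite (below d a)"
proof -
  have "below d a \<subseteq> {xs. set xs \<subseteq> {0..Max (set a \<union> {0})} \<and> length xs = d}"
  proof
    fix b assume b: "b \<in> below d a"
    have "set b \<subseteq> {0..Max (set a \<union> {0})}"
    proof
      fix x assume "x \<in> set b"
      then obtain j where j: "j < length b" "b ! j = x" by (auto simp: in_set_conv_nth)
      have "a ! j \<in> set a \<union> {0}" using j b assms by (simp add: below_iff)
      then have "a ! j \<le> Max (set a \<union> {0})" by simp
      then show "x \<in> {0..Max (set a \<union> {0})}" using b j by (auto simp: below_iff)
    qed
    then show "b \<in> {xs. set xs \<subseteq> {0..Max (set a \<union> {0})} \<and> length xs = d}"
      using b by (simp add: below_iff)
  qed
  then show ?thesis by (rule finite_subset) (simp add: finite_lists_length_eq)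
qed

lemma below_lsub: "length a = d \<Longrightarrow> b \<in> below d a \<Longrightarrow> lsub a b \<in> below d a"
  by (auto simp: below_iff)

lemma lsub_lsub: "length a = d \<Longrightarrow> b \<in> below d a \<Longrightarrow> lsub a (lsub a b) = b"
  by (auto simp: below_iff intro!: nth_equalityI)

definition cv :: "nat \<Rightarrow> pser \<Rightarrow> pser \<Rightarrow> nat list \<Rightarrow> nat \<Rightarrow> int" where
  "cv d F G a n = (\<Sum>b\<in>below d a. F b n * G (lsub a b) n)"

lemma ps_mul_eq: "ps_mul p d F G a n = (if length a = d then cv d F G a n mod p ^ n else 0)"
  by (simp add: ps_mul_def cv_def lsub_def)

lemma cv_comm: assumes "length a = d" shows "cv d F G a n = cv d G F a n"
  unfolding cv_def
  by (rule sum.reindex_bij_witness[where i="lsub a" and j="lsub a"])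
     (auto simp: assms below_lsub lsub_lsub mult.commute)

lemma ps_mul_comm: "ps_mul p d F G = ps_mul p d G F"
  by (intro ext) (simp add: ps_mul_eq cv_comm)

lemma sum_mod_mult_left: "(\<Sum>x\<in>A. (f x mod (m::int)) * g x) mod m = (\<Sum>x\<in>A. f x * g x) mod m"
proof -
  have "(\<Sum>x\<in>A. (f x mod m) * g x) mod m = (\<Sum>x\<in>A. ((f x mod m) * g x) mod m) mod m"
    by (simp add: mod_sum_eq)
  also have "\<dots> = (\<Sum>x\<in>A. (f x * g x) mod m) mod m" by (simp add: mod_mult_left_eq)
  also have "\<dots> = (\<Sum>x\<in>A. f x * g x) mod m" by (simp add: mod_sum_eq)
  finally show ?thesis .
qed

lemma sum_mod_mult_right: "(\<Sum>x\<in>A. g x * (f x mod (m::int))) mod m = (\<Sum>x\<in>A. g x * f x) mod m"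
  using sum_mod_mult_left[of "\<lambda>x. f x" m "\<lambda>x. g x" A] by (simp add: mult.commute)

lemma sum_mod_inner: "(\<Sum>x\<in>A. f x mod (m::int)) mod m = (\<Sum>x\<in>A. f x) mod m"
  by (simp add: mod_sum_eq)

lemma cv_assoc_int:
  fixes f g h :: "nat list \<Rightarrow> int"
  assumes a: "length a = d"
  shows "(\<Sum>b\<in>below d a. (\<Sum>c\<in>below d b. f c * g (lsub b c)) * h (lsub a b)) =
         (\<Sum>c\<in>below d a. f c * (\<Sum>e\<in>below d (lsub a c). g e * h (lsub (lsub a c) e)))"
proof -
  have L: "(\<Sum>b\<in>below d a. (\<Sum>c\<in>below d b. f c * g (lsub b c)) * h (lsub a b)) =
        (\<Sum>(b,c)\<in>Sigma (below d a) (\<lambda>b. below d b). f c * g (lsub b c) * h (lsub a b))"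
  proof -
    have "(\<Sum>b\<in>below d a. (\<Sum>c\<in>below d b. f c * g (lsub b c)) * h (lsub a b)) =
       (\<Sum>b\<in>below d a. \<Sum>c\<in>below d b. f c * g (lsub b c) * h (lsub a b))"
      by (simp add: sum_distrib_right)
    also have "\<dots> = (\<Sum>(b,c)\<in>Sigma (below d a) (\<lambda>b. below d b). f c * g (lsub b c) * h (lsub a b))"
      by (rule sum.Sigma) (auto simp: finite_below a below_iff)
    finally show ?thesis .
  qed
  have R: "(\<Sum>c\<in>below d a. f c * (\<Sum>e\<in>below d (lsub a c). g e * h (lsub (lsub a c) e))) =
        (\<Sum>(c,e)\<in>Sigma (below d a) (\<lambda>c. below d (lsub a c)). f c * (g e * h (lsub (lsub a c) e)))"
  proof -
    have "(\<Sum>c\<in>below d a. f c * (\<Sum>e\<in>below d (lsub a c). g e * h (lsub (lsub a c) e))) =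
       (\<Sum>c\<in>below d a. \<Sum>e\<in>below d (lsub a c). f c * (g e * h (lsub (lsub a c) e)))"
      by (simp add: sum_distrib_left)
    also have "\<dots> = (\<Sum>(c,e)\<in>Sigma (below d a) (\<lambda>c. below d (lsub a c)). f c * (g e * h (lsub (lsub a c) e)))"
      by (rule sum.Sigma) (auto simp: finite_below a below_iff)
    finally show ?thesis .
  qed
  have "(\<Sum>(b,c)\<in>Sigma (below d a) (\<lambda>b. below d b). f c * g (lsub b c) * h (lsub a b))
      = (\<Sum>(c,e)\<in>Sigma (below d a) (\<lambda>c. below d (lsub a c)). f c * (g e * h (lsub (lsub a c) e)))"
  proof (rule sum.reindex_bij_witness[where i="\<lambda>(c,e). (ladd c e, c)" and j="\<lambda>(b,c). (c, lsub b c)"])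
    fix x assume x: "x \<in> Sigma (below d a) (\<lambda>b. below d b)"
    obtain b c where bc: "x = (b,c)" by (cases x)
    from x bc have b: "length b = d" "\<forall>j<d. b!j \<le> a!j" and c: "length c = d" "\<forall>j<d. c!j \<le> b!j"
      by (auto simp: below_iff)
    show "(case case x of (b, c) \<Rightarrow> (c, lsub b c) of (c, e) \<Rightarrow> (ladd c e, c)) = x"
      using b c bc by (auto intro!: nth_equalityI)
    show "(case x of (b, c) \<Rightarrow> (c, lsub b c)) \<in> Sigma (below d a) (\<lambda>c. below d (lsub a c))"
      using b c bc a by (force simp: below_iff)
    show "(case case x of (b, c) \<Rightarrow> (c, lsub b c) of (c, e) \<Rightarrow> f c * (g e * h (lsub (lsub a c) e))) =
          (case x of (b, c) \<Rightarrow> f c * g (lsub b c) * h (lsub a b))"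
    proof -
      have "lsub (lsub a c) (lsub b c) = lsub a b" using a b c
        by (force intro!: nth_equalityI)
      then show ?thesis using bc by simp
    qed
  next
    fix y assume y: "y \<in> Sigma (below d a) (\<lambda>c. below d (lsub a c))"
    obtain c e where ce: "y = (c,e)" by (cases y)
    from y ce a have c: "length c = d" "\<forall>j<d. c!j \<le> a!j" and e: "length e = d" "\<forall>j<d. e!j \<le> a!j - c!j"
      by (auto simp: below_iff)
    show "(case case y of (c, e) \<Rightarrow> (ladd c e, c) of (b, c) \<Rightarrow> (c, lsub b c)) = y"
      using c e ce by (auto intro!: nth_equalityI)
    show "(case y of (c, e) \<Rightarrow> (ladd c e, c)) \<in> Sigma (below d a) (\<lambda>b. below d b)"
      using c e ce by (force simp: below_iff)
  qed
  then show ?thesis using L R by simp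
qed

lemma ps_mul_assoc: "ps_mul p d (ps_mul p d F G) H = ps_mul p d F (ps_mul p d G H)"
proof (intro ext)
  fix a n
  show "ps_mul p d (ps_mul p d F G) H a n = ps_mul p d F (ps_mul p d G H) a n"
  proof (cases "length a = d")
    case False then show ?thesis by (simp add: ps_mul_eq)
  next
    case True
    have 1: "ps_mul p d (ps_mul p d F G) H a n =
       (\<Sum>b\<in>below d a. (\<Sum>c\<in>below d b. F c n * G (lsub b c) n) * H (lsub a b) n) mod p^n"
    proof -
      have "ps_mul p d (ps_mul p d F G) H a n =
         (\<Sum>b\<in>below d a. (cv d F G b n mod p^n) * H (lsub a b) n) mod p^n"
        using True unfolding ps_mul_eq cv_def[of d "ps_mul p d F G"]
        by (auto simp: ps_mul_eq below_iff intro!: arg_cong[where f="\<lambda>x. x mod p^n"] sum.cong)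
      also have "\<dots> = (\<Sum>b\<in>below d a. cv d F G b n * H (lsub a b) n) mod p^n"
        by (rule sum_mod_mult_left)
      finally show ?thesis by (simp add: cv_def)
    qed
    have 2: "ps_mul p d F (ps_mul p d G H) a n =
       (\<Sum>c\<in>below d a. F c n * (\<Sum>e\<in>below d (lsub a c). G e n * H (lsub (lsub a c) e) n)) mod p^n"
    proof -
      have "ps_mul p d F (ps_mul p d G H) a n =
         (\<Sum>c\<in>below d a. F c n * (cv d G H (lsub a c) n mod p^n)) mod p^n"
        using True unfolding ps_mul_eq cv_def[of d F]
        by (auto simp: ps_mul_eq below_iff intro!: arg_cong[where f="\<lambda>x. x mod p^n"] sum.cong)
      also have "\<dots> = (\<Sum>c\<in>below d a. F c n * cv d G H (lsub a c) n) mod p^n"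
        by (rule sum_mod_mult_right)
      finally show ?thesis by (simp add: cv_def)
    qed
    show ?thesis unfolding 1 2 using cv_assoc_int[OF True, of "\<lambda>c. F c n" "\<lambda>e. G e n" "\<lambda>x. H x n"] by simp
  qed
qed

lemma zp_bounds: "x \<in> Zp p \<Longrightarrow> 0 \<le> x n \<and> x n < p ^ n"
  by (simp add: Zp_def)

lemma zp_mod: assumes "x \<in> Zp p" "m \<le> n" shows "x n mod p ^ m = x m"
  using assms(2)
proof (induction n)
  case 0 then show ?case using zp_bounds[OF assms(1), of 0] by simp
next
  case (Suc n)
  show ?case
  proof (cases "m = Suc n")
    case True then show ?thesis using zp_bounds[OF assms(1), of "Suc n"] by simp
  next
    case False
    then have mn: "m \<le> n" using Suc by simp
    have "x (Suc n) mod p ^ m = (x (Suc n) mod p ^ n) mod p ^ m"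
      by (simp add: mn le_imp_power_dvd mod_mod_cancel)
    also have "\<dots> = x n mod p ^ m" using assms(1) by (simp add: Zp_def)
    finally show ?thesis using Suc.IH mn by simp
  qed
qed

lemma PS_Zp: "F \<in> PS p d \<Longrightarrow> length a = d \<Longrightarrow> F a \<in> Zp p"
  by (simp add: PS_def)
lemma PS_off: "F \<in> PS p d \<Longrightarrow> length a \<noteq> d \<Longrightarrow> F a n = 0"
  by (simp add: PS_def)

lemma PS_mod: assumes "F \<in> PS p d" shows "F a n mod p ^ n = F a n"
proof (cases "length a = d")
  case True
  then have "F a \<in> Zp p" using assms PS_Zp by blast
  then show ?thesis using zp_bounds[of "F a" p n] by simp
qed (simp add: PS_off[OF assms(1)])

lemma PS_zero_level: "F \<in> PS p d \<Longrightarrow> F a 0 = 0"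
  using PS_mod[of F p d a 0] by simp

lemma PS_mod_le: assumes "F \<in> PS p d" "m \<le> n" shows "F a n mod p ^ m = F a m"
proof (cases "length a = d")
  case True
  then have "F a \<in> Zp p" using assms PS_Zp by blast
  then show ?thesis using zp_mod assms(2) by blast
qed (simp add: PS_off[OF assms(1)])

definition compat :: "int \<Rightarrow> (nat \<Rightarrow> int) \<Rightarrow> bool" where
  "compat p E \<longleftrightarrow> (\<forall>n. E (Suc n) mod p ^ n = E n mod p ^ n)"

lemma zp_of_compat: assumes "p > 0" "compat p E" shows "(\<lambda>n. E n mod p ^ n) \<in> Zp p"
proof -
  have "(E (Suc n) mod p ^ Suc n) mod p ^ n = E n mod p ^ n" for n
  proof -
    have "(E (Suc n) mod p ^ Suc n) mod p ^ n = E (Suc n) mod p ^ n"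
      by (simp add: le_imp_power_dvd mod_mod_cancel)
    then show ?thesis using assms(2) by (simp add: compat_def)
  qed
  then show ?thesis using assms(1) by (simp add: Zp_def)
qed

lemma compat_add: "compat p E \<Longrightarrow> compat p E' \<Longrightarrow> compat p (\<lambda>n. E n + E' n)"
  unfolding compat_def
proof
  fix n assume "\<forall>n. E (Suc n) mod p ^ n = E n mod p ^ n" "\<forall>n. E' (Suc n) mod p ^ n = E' n mod p ^ n"
  then have "(E (Suc n) mod p ^ n + E' (Suc n) mod p ^ n) mod p ^ n = (E n mod p ^ n + E' n mod p ^ n) mod p ^ n" by simp
  then show "(E (Suc n) + E' (Suc n)) mod p ^ n = (E n + E' n) mod p ^ n" by (simp add: mod_add_eq)
qed
lemma compat_mult: "compat p E \<Longrightarrow> compat p E' \<Longrightarrow> compat p (\<lambda>n. E n * E' n)"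
  unfolding compat_def
proof
  fix n assume "\<forall>n. E (Suc n) mod p ^ n = E n mod p ^ n" "\<forall>n. E' (Suc n) mod p ^ n = E' n mod p ^ n"
  then have "(E (Suc n) mod p ^ n * (E' (Suc n) mod p ^ n)) mod p ^ n = (E n mod p ^ n * (E' n mod p ^ n)) mod p ^ n" by simp
  then show "(E (Suc n) * E' (Suc n)) mod p ^ n = (E n * E' n) mod p ^ n" by (simp add: mod_mult_eq)
qed
lemma compat_uminus: "compat p E \<Longrightarrow> compat p (\<lambda>n. - E n)"
  unfolding compat_def
proof
  fix n assume "\<forall>n. E (Suc n) mod p ^ n = E n mod p ^ n"
  then have "(- (E (Suc n) mod p ^ n)) mod p ^ n = (- (E n mod p ^ n)) mod p ^ n" by simp
  then show "(- E (Suc n)) mod p ^ n = (- E n) mod p ^ n" by (simp add: mod_minus_eq)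
qed
lemma compat_const: "compat p (\<lambda>n. c)"
  unfolding compat_def by simp
lemma compat_sum: "(\<And>x. x \<in> A \<Longrightarrow> compat p (E x)) \<Longrightarrow> compat p (\<lambda>n. \<Sum>x\<in>A. E x n)"
proof (induction A rule: infinite_finite_induct)
  case (infinite A) then show ?case by (simp add: compat_def)
next
  case empty then show ?case by (simp add: compat_def)
next
  case (insert x F)
  then show ?case by (simp add: compat_add)
qed
lemma compat_zp: "x \<in> Zp p \<Longrightarrow> compat p x"
  unfolding compat_def Zp_def by simp
lemma compat_PS: assumes "F \<in> PS p d" shows "compat p (F a)"
proof (cases "length a = d")
  case True
  then have "F a \<in> Zp p" using assms PS_Zp by blast
  then show ?thesis by (rule compat_zp)
qed (simp add: PS_off[OF assms(1)] compat_def)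
lemma compat_mod: "compat p E \<Longrightarrow> compat p (\<lambda>n. E n mod p ^ n)"
  unfolding compat_def
proof
  fix n
  have "(E (Suc n) mod p ^ Suc n) mod p ^ n = E (Suc n) mod p ^ n"
    by (simp add: le_imp_power_dvd mod_mod_cancel)
  moreover assume "\<forall>n. E (Suc n) mod p ^ n = E n mod p ^ n"
  ultimately show "E (Suc n) mod p ^ Suc n mod p ^ n = E n mod p ^ n mod p ^ n" by simp
qed

lemma PS_intro:
  assumes "p > 0" "\<And>a. length a = d \<Longrightarrow> compat p (E a)"
    "\<And>a n. length a = d \<Longrightarrow> G a n = E a n mod p ^ n"
    "\<And>a n. length a \<noteq> d \<Longrightarrow> G a n = 0"
  shows "G \<in> PS p d"
proof -
  have "G a \<in> Zp p" if "length a = d" for a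
  proof -
    have "G a = (\<lambda>n. E a n mod p ^ n)" using assms(3) that by auto
    then show ?thesis using zp_of_compat[OF assms(1) assms(2)[OF that]] by simp
  qed
  moreover have "G a = (\<lambda>n. 0)" if "length a \<noteq> d" for a using assms(4) that by auto
  ultimately show ?thesis by (simp add: PS_def)
qed

definition ps_neg :: "int \<Rightarrow> pser \<Rightarrow> pser" where
  "ps_neg p F = (\<lambda>a n. (- F a n) mod p ^ n)"

lemma ps_add_PS: "p > 0 \<Longrightarrow> F \<in> PS p d \<Longrightarrow> G \<in> PS p d \<Longrightarrow> ps_add p F G \<in> PS p d"
  by (rule PS_intro[where E="\<lambda>a n. F a n + G a n"])
     (auto simp: ps_add_def PS_off[of F] PS_off[of G] compat_add compat_PS)

lemma ps_neg_PS: "p > 0 \<Longrightarrow> F \<in> PS p d \<Longrightarrow> ps_neg p F \<in> PS p d"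
  by (rule PS_intro[where E="\<lambda>a n. - F a n"])
     (auto simp: ps_neg_def PS_off[of F] compat_uminus compat_PS)

lemma ps_zero_PS: "p > 0 \<Longrightarrow> ps_zero \<in> PS p d"
  by (simp add: PS_def ps_zero_def Zp_def)

lemma ps_one_PS: "p > 0 \<Longrightarrow> ps_one p d \<in> PS p d"
  by (rule PS_intro[where E="\<lambda>a n. if a = replicate d 0 then 1 else 0"])
     (auto simp: ps_one_def compat_def)

lemma ps_sum_PS: assumes "p > 0" and G: "\<And>x. x \<in> A \<Longrightarrow> G x \<in> PS p d"
  shows "ps_sum p A G \<in> PS p d"
proof (rule PS_intro[where E="\<lambda>a n. \<Sum>x\<in>A. G x a n"])
  show "compat p (\<lambda>n. \<Sum>x\<in>A. G x a n)" for a by (intro compat_sum compat_PS[OF G])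
  show "ps_sum p A G a n = 0" if "length a \<noteq> d" for a n
  proof -
    have "G x a n = 0" if "x \<in> A" for x using PS_off[OF G[OF that]] \<open>length a \<noteq> d\<close> by simp
    then show ?thesis by (simp add: ps_sum_def)
  qed
qed (simp_all add: ps_sum_def assms)

lemma ps_smult_PS: "p > 0 \<Longrightarrow> c \<in> Zp p \<Longrightarrow> G \<in> PS p d \<Longrightarrow> ps_smult p c G \<in> PS p d"
  by (rule PS_intro[where E="\<lambda>a n. c n * G a n"])
     (auto simp: ps_smult_def PS_off[of G] compat_mult compat_PS compat_zp)

lemma compat_cv: "F \<in> PS p d \<Longrightarrow> G \<in> PS p d \<Longrightarrow> compat p (cv d F G a)"
  unfolding cv_def by (intro compat_sum compat_mult compat_PS)

lemma ps_mul_PS: "p > 0 \<Longrightarrow> F \<in> PS p d \<Longrightarrow> G \<in> PS p d \<Longrightarrow> ps_mul p d F G \<in> PS p d"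
  by (rule PS_intro[where E="\<lambda>a n. cv d F G a n"])
     (auto simp: ps_mul_eq compat_cv)

lemma ps_pow_PS: "p > 0 \<Longrightarrow> F \<in> PS p d \<Longrightarrow> ps_pow p d F k \<in> PS p d"
  by (induction k) (auto simp: ps_one_PS ps_mul_PS)

lemma mon_prod_PS: assumes "p > 0" "set Z \<subseteq> PS p d" "length Z = d"
  shows "mon_prod p d Z a \<in> PS p d"
proof -
  have H: "foldr (\<lambda>j acc. ps_mul p d (ps_pow p d (Z ! j) (a ! j)) acc) js (ps_one p d) \<in> PS p d"
    if "set js \<subseteq> {..<d}" for js
    using that
  proof (induction js)
    case Nil then show ?case using assms by (simp add: ps_one_PS)
  next
    case (Cons j js)
    then have "Z ! j \<in> PS p d" using assms by (auto simp: nth_mem subset_iff)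
    with Cons show ?case using assms by (simp add: ps_mul_PS ps_pow_PS)
  qed
  have "set [0..<d] \<subseteq> {..<d}" by auto
  from H[OF this] show ?thesis unfolding mon_prod_def .
qed

lemma ps_add_comm: "ps_add p F G = ps_add p G F"
  by (simp add: ps_add_def add.commute)

lemma ps_add_assoc: "ps_add p (ps_add p F G) H = ps_add p F (ps_add p G H)"
  unfolding ps_add_def by (intro ext) (simp add: mod_add_left_eq mod_add_right_eq add.assoc)

lemma ps_add_zero: "F \<in> PS p d \<Longrightarrow> ps_add p F ps_zero = F"
  by (intro ext) (simp add: ps_add_def ps_zero_def PS_mod)

lemma ps_zero_add: "F \<in> PS p d \<Longrightarrow> ps_add p ps_zero F = F"
  by (intro ext) (simp add: ps_add_def ps_zero_def PS_mod)

lemma ps_add_neg: "ps_add p F (ps_neg p F) = ps_zero"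
proof (intro ext)
  fix a n
  have "(F a n + (- F a n) mod p ^ n) mod p ^ n = (F a n + - F a n) mod p ^ n"
    by (rule mod_add_right_eq)
  then show "ps_add p F (ps_neg p F) a n = ps_zero a n" by (simp add: ps_add_def ps_neg_def ps_zero_def)
qed

lemma ps_mul_distrib: "ps_mul p d F (ps_add p G H) = ps_add p (ps_mul p d F G) (ps_mul p d F H)"
proof (intro ext)
  fix a n
  show "ps_mul p d F (ps_add p G H) a n = ps_add p (ps_mul p d F G) (ps_mul p d F H) a n"
  proof (cases "length a = d")
    case True
    have "ps_mul p d F (ps_add p G H) a n = (\<Sum>b\<in>below d a. F b n * ((G (lsub a b) n + H (lsub a b) n) mod p^n)) mod p^n"
      using True unfolding ps_mul_eq cv_def ps_add_def by simp
    also have "\<dots> = (\<Sum>b\<in>below d a. F b n * (G (lsub a b) n + H (lsub a b) n)) mod p^n"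
      by (rule sum_mod_mult_right)
    also have "\<dots> = (cv d F G a n + cv d F H a n) mod p^n"
      unfolding cv_def distrib_left sum.distrib ..
    also have "\<dots> = (cv d F G a n mod p^n + cv d F H a n mod p^n) mod p^n"
      by (rule mod_add_eq[symmetric])
    also have "\<dots> = ps_add p (ps_mul p d F G) (ps_mul p d F H) a n"
      using True unfolding ps_add_def ps_mul_eq by simp
    finally show ?thesis .
  next
    case False then show ?thesis unfolding ps_mul_eq ps_add_def by simp
  qed
qed

lemma ps_mul_distrib_right: "ps_mul p d (ps_add p G H) F = ps_add p (ps_mul p d G F) (ps_mul p d H F)"
  using ps_mul_distrib[of p d F G H] by (simp only: ps_mul_comm[of p d F])

lemma ps_mul_zero: "ps_mul p d F ps_zero = ps_zero"
  by (intro ext) (simp add: ps_mul_eq cv_def ps_zero_def)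

lemma zero_below: "length a = d \<Longrightarrow> replicate d 0 \<in> below d a"
  by (simp add: below_iff)

lemma lsub_zero: "length a = d \<Longrightarrow> lsub a (replicate d 0) = a"
  by (auto intro!: nth_equalityI)

lemma ps_one_mul: assumes "F \<in> PS p d" shows "ps_mul p d (ps_one p d) F = F"
proof (intro ext)
  fix a n
  show "ps_mul p d (ps_one p d) F a n = F a n"
  proof (cases "length a = d")
    case True
    have "cv d (ps_one p d) F a n = (\<Sum>b\<in>below d a. if b = replicate d 0 then (1 mod p^n) * F (lsub a b) n else 0)"
      unfolding cv_def ps_one_def by (intro sum.cong) auto
    also have "\<dots> = (1 mod p^n) * F a n"
      by (subst sum.delta) (auto simp: finite_below True zero_below lsub_zero)
    finally have "cv d (ps_one p d) F a n = (1 mod p^n) * F a n" .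
    then show ?thesis using True assms
      by (simp add: ps_mul_eq mod_mult_left_eq PS_mod)
  qed (simp add: ps_mul_eq PS_off[OF assms])
qed

lemma ps_mul_one: "F \<in> PS p d \<Longrightarrow> ps_mul p d F (ps_one p d) = F"
  by (subst ps_mul_comm) (rule ps_one_mul)

definition vv :: "int \<Rightarrow> nat \<Rightarrow> pser \<Rightarrow> nat \<Rightarrow> bool" where
  "vv p d F k \<longleftrightarrow> (\<forall>a n. length a = d \<longrightarrow> n + sum_list a \<le> k \<longrightarrow> F a n = 0)"

lemma sum_list_nth: "sum_list xs = (\<Sum>i<length xs. xs ! i)"
  by (simp add: sum_list_sum_nth atLeast0LessThan)

lemma below_sum: assumes "length a = d" "b \<in> below d a"
  shows "sum_list b \<le> sum_list a" "sum_list (lsub a b) = sum_list a - sum_list b"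
proof -
  have le: "\<forall>i<d. b ! i \<le> a ! i" and lb: "length b = d" using assms by (auto simp: below_iff)
  show "sum_list b \<le> sum_list a" unfolding sum_list_nth using le lb assms(1)
    by (auto intro: sum_mono)
  have "sum_list (lsub a b) = (\<Sum>i<d. a ! i - b ! i)"
    unfolding sum_list_nth using lb assms(1) by simp
  also have "\<dots> = (\<Sum>i<d. a ! i) - (\<Sum>i<d. b ! i)"
    by (rule sum_subtractf_nat) (use le in auto)
  finally show "sum_list (lsub a b) = sum_list a - sum_list b"
    unfolding sum_list_nth using lb assms(1) by simp
qed

lemma vv_dvd: assumes "F \<in> PS p d" "vv p d F k" "length b = d"
  shows "p ^ (min n (k - sum_list b)) dvd F b n"
proof -
  define m where "m = min n (k - sum_list b)"
  have "F b n mod p ^ m = F b m" using PS_mod_le[OF assms(1)] m_def by simp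
  moreover have "F b m = 0"
  proof (cases "sum_list b \<le> k")
    case True then have "m + sum_list b \<le> k" by (simp add: m_def)
    then show ?thesis using assms(2,3) by (simp add: vv_def)
  next
    case False then have "m = 0" by (simp add: m_def)
    then show ?thesis using PS_zero_level[OF assms(1)] by simp
  qed
  ultimately show ?thesis unfolding m_def by (simp add: mod_eq_0_iff_dvd)
qed

lemma vv_mul: assumes "F \<in> PS p d" "G \<in> PS p d" "vv p d F k" "vv p d G l"
  shows "vv p d (ps_mul p d F G) (k + l)"
  unfolding vv_def
proof (intro allI impI)
  fix a n assume a: "length a = d" and n: "n + sum_list a \<le> k + l"
  have "p ^ n dvd F b n * G (lsub a b) n" if b: "b \<in> below d a" for b
  proof -
    have lb: "length b = d" using b by (simp add: below_iff)
    have s: "sum_list b \<le> sum_list a" "sum_list (lsub a b) = sum_list a - sum_list b"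
      using below_sum[OF a b] by auto
    have d1: "p ^ (min n (k - sum_list b)) dvd F b n" by (rule vv_dvd[OF assms(1,3) lb])
    have d2: "p ^ (min n (l - sum_list (lsub a b))) dvd G (lsub a b) n"
      by (rule vv_dvd[OF assms(2,4)]) (simp add: a lb)
    have "p ^ (min n (k - sum_list b) + min n (l - sum_list (lsub a b))) dvd F b n * G (lsub a b) n"
      unfolding power_add by (rule mult_dvd_mono[OF d1 d2])
    moreover have "n \<le> min n (k - sum_list b) + min n (l - sum_list (lsub a b))"
      using s n by simp
    ultimately show ?thesis by (meson dvd_trans le_imp_power_dvd)
  qed
  then have "p ^ n dvd cv d F G a n" unfolding cv_def by (intro dvd_sum) auto
  then show "ps_mul p d F G a n = 0" using a by (simp add: ps_mul_eq mod_eq_0_iff_dvd)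
qed

lemma vv_0: "F \<in> PS p d \<Longrightarrow> vv p d F 0"
  by (simp add: vv_def PS_zero_level)

lemma vv_mono: "vv p d F k \<Longrightarrow> l \<le> k \<Longrightarrow> vv p d F l"
  by (auto simp: vv_def)

lemma sum_list_zero_replicate: "length a = d \<Longrightarrow> sum_list (a::nat list) = 0 \<Longrightarrow> a = replicate d 0"
  by (metis in_set_conv_nth nth_equalityI nth_replicate length_replicate sum_list_eq_0_iff)

lemma PSmax_PS: "F \<in> PSmax p d \<Longrightarrow> F \<in> PS p d"
  by (simp add: PSmax_def)

lemma vv_max: assumes "F \<in> PSmax p d" shows "vv p d F 1"
  unfolding vv_def
proof (intro allI impI)
  fix a :: "nat list" and n assume a: "length a = d" "n + sum_list a \<le> 1"
  show "F a n = 0"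
  proof (cases n)
    case 0 then show ?thesis using PS_zero_level[OF PSmax_PS[OF assms]] by simp
  next
    case (Suc m)
    then have "n = 1" "sum_list a = 0" using a by auto
    then show ?thesis using sum_list_zero_replicate[OF a(1)] assms by (simp add: PSmax_def)
  qed
qed

lemma vv_pow: assumes "p > 0" "F \<in> PSmax p d" shows "vv p d (ps_pow p d F k) k"
proof (induction k)
  case 0 then show ?case using vv_0[OF ps_one_PS[OF assms(1)]] by simp
next
  case (Suc k)
  have "vv p d (ps_mul p d F (ps_pow p d F k)) (1 + k)"
    by (rule vv_mul[OF PSmax_PS[OF assms(2)] ps_pow_PS[OF assms(1) PSmax_PS[OF assms(2)]] vv_max[OF assms(2)] Suc])
  then show ?case by simp
qed

lemma vv_all: assumes "F \<in> PS p d" "\<And>k. vv p d F k" shows "F = ps_zero"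
proof (intro ext)
  fix a n show "F a n = ps_zero a n"
  proof (cases "length a = d")
    case True then show ?thesis using assms(2)[of "n + sum_list a"] by (simp add: vv_def ps_zero_def)
  qed (simp add: PS_off[OF assms(1)] ps_zero_def)
qed

lemma mon_prod_vv: assumes "p > 0" "set Z \<subseteq> PSmax p d" "length Z = d" "length a = d"
  shows "vv p d (mon_prod p d Z a) (sum_list a)"
proof -
  have ZP: "set Z \<subseteq> PS p d" using assms(2) by (auto simp: PSmax_def)
  have H: "foldr (\<lambda>j acc. ps_mul p d (ps_pow p d (Z ! j) (a ! j)) acc) js (ps_one p d) \<in> PS p d \<and>
        vv p d (foldr (\<lambda>j acc. ps_mul p d (ps_pow p d (Z ! j) (a ! j)) acc) js (ps_one p d)) (sum_list (map (\<lambda>j. a ! j) js))"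
    if "set js \<subseteq> {..<d}" for js
    using that
  proof (induction js)
    case Nil then show ?case using assms by (simp add: ps_one_PS vv_0)
  next
    case (Cons j js)
    then have Zj: "Z ! j \<in> PSmax p d" using assms by (auto simp: nth_mem subset_iff)
    have P: "ps_pow p d (Z ! j) (a ! j) \<in> PS p d" using ps_pow_PS[OF assms(1) PSmax_PS[OF Zj]] .
    from Cons have IH: "foldr (\<lambda>j acc. ps_mul p d (ps_pow p d (Z ! j) (a ! j)) acc) js (ps_one p d) \<in> PS p d"
       "vv p d (foldr (\<lambda>j acc. ps_mul p d (ps_pow p d (Z ! j) (a ! j)) acc) js (ps_one p d)) (sum_list (map (\<lambda>j. a ! j) js))"
      by auto
    show ?case using ps_mul_PS[OF assms(1) P IH(1)] vv_mul[OF P IH(1) vv_pow[OF assms(1) Zj] IH(2)]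
      by simp
  qed
  have "set [0..<d] \<subseteq> {..<d}" by auto
  from H[OF this] have "vv p d (mon_prod p d Z a) (sum_list (map (\<lambda>j. a ! j) [0..<d]))"
    unfolding mon_prod_def by simp
  moreover have "map (\<lambda>j. a ! j) [0..<d] = a" using assms(4) by (metis map_nth)
  ultimately show ?thesis by simp
qed

lemma mon_prod_off: assumes "d \<ge> 1" "length g \<noteq> d" shows "mon_prod p d Z a g n = 0"
proof -
  obtain e where "d = Suc e" using assms(1) by (cases d) auto
  then have "[0..<d] = 0 # [1..<d]" by (simp add: upt_rec)
  then show ?thesis unfolding mon_prod_def using assms(2) by (simp add: ps_mul_eq)
qed

lemma finite_mons_lt: "finite (mons_lt d N)"
proof -
  have "mons_lt d N \<subseteq> {xs. set xs \<subseteq> {0..N} \<and> length xs = d}"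
    by (auto simp: mons_lt_def dest!: elem_le_sum_list[unfolded in_set_conv_nth] simp: in_set_conv_nth)
  then show ?thesis by (rule finite_subset) (simp add: finite_lists_length_eq)
qed

definition psum :: "int \<Rightarrow> nat \<Rightarrow> pser \<Rightarrow> pser list \<Rightarrow> nat \<Rightarrow> pser" where
  "psum p d F Z N = ps_sum p (mons_lt d N) (\<lambda>\<alpha>. ps_smult p (F \<alpha>) (mon_prod p d Z \<alpha>))"

lemma psum_eq: "psum p d F Z N g n = (\<Sum>a\<in>mons_lt d N. F a n * mon_prod p d Z a g n) mod p ^ n"
  unfolding psum_def ps_sum_def ps_smult_def by (rule sum_mod_inner)

lemma mons_lt_Suc: "mons_lt d (Suc N) = mons_lt d N \<union> {a. length a = d \<and> sum_list a = N}"
  by (auto simp: mons_lt_def)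

locale setting =
  fixes p :: int and d :: nat and Z :: "pser list"
  assumes p_pos: "p > 0" and d_pos: "d \<ge> 1" and Zmax: "set Z \<subseteq> PSmax p d" and Zlen: "length Z = d"
begin

lemma ZPS: "set Z \<subseteq> PS p d" using Zmax by (auto simp: PSmax_def)

lemma mon_PS: "mon_prod p d Z a \<in> PS p d"
  by (rule mon_prod_PS[OF p_pos ZPS Zlen])

lemma psum_Suc: assumes "N \<ge> n + sum_list g"
  shows "psum p d F Z (Suc N) g n = psum p d F Z N g n"
proof (cases "length g = d")
  case True
  have fin: "finite {a. length a = d \<and> sum_list a = N}"
    by (rule finite_subset[OF _ finite_mons_lt[of d "Suc N"]]) (auto simp: mons_lt_def)
  have z: "mon_prod p d Z a g n = 0" if "a \<in> {a. length a = d \<and> sum_list a = N}" for a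
    using mon_prod_vv[OF p_pos Zmax Zlen, of a] that True assms by (auto simp: vv_def)
  have "(\<Sum>a\<in>mons_lt d (Suc N). F a n * mon_prod p d Z a g n) =
        (\<Sum>a\<in>mons_lt d N. F a n * mon_prod p d Z a g n) + (\<Sum>a\<in>{a. length a = d \<and> sum_list a = N}. F a n * mon_prod p d Z a g n)"
    unfolding mons_lt_Suc by (rule sum.union_disjoint) (use finite_mons_lt fin in \<open>auto simp: mons_lt_def\<close>)
  also have "(\<Sum>a\<in>{a. length a = d \<and> sum_list a = N}. F a n * mon_prod p d Z a g n) = 0"
    using z by simp
  finally show ?thesis by (simp add: psum_eq)
next
  case False
  then show ?thesis by (simp add: psum_eq mon_prod_off[OF d_pos])
qed

lemma psum_stable: assumes "N \<ge> n + sum_list g"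
  shows "psum p d F Z N g n = psum p d F Z (n + sum_list g) g n"
  using assms
proof (induction N rule: dec_induct)
  case base then show ?case by simp
next
  case (step N) then show ?case using psum_Suc[of n g N F] by simp
qed

lemma subst_eq: assumes "N \<ge> n + sum_list g"
  shows "subst p d F Z g n = psum p d F Z N g n"
proof -
  let ?P = "\<lambda>N. psum p d F Z N g n"
  have "subst p d F Z g n = (THE v. \<exists>N0. \<forall>N\<ge>N0. ?P N = v)"
    unfolding subst_def psum_def by simp
  also have "\<dots> = ?P (n + sum_list g)"
  proof (rule the_equality)
    show "\<exists>N0. \<forall>N\<ge>N0. ?P N = ?P (n + sum_list g)"
      by (rule exI[of _ "n + sum_list g"]) (auto intro: psum_stable)
  next
    fix v assume "\<exists>N0. \<forall>N\<ge>N0. ?P N = v"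
    then obtain N0 where "\<forall>N\<ge>N0. ?P N = v" by blast
    then have "?P (max N0 (n + sum_list g)) = v" by simp
    moreover have "?P (max N0 (n + sum_list g)) = ?P (n + sum_list g)" by (rule psum_stable) simp
    ultimately show "v = ?P (n + sum_list g)" by simp
  qed
  also have "\<dots> = ?P N" using psum_stable[OF assms] by simp
  finally show ?thesis .
qed

lemma subst_formula: assumes "N \<ge> n + sum_list g"
  shows "subst p d F Z g n = (\<Sum>a\<in>mons_lt d N. F a n * mon_prod p d Z a g n) mod p ^ n"
  using subst_eq[OF assms] psum_eq by simp

end

lemma ps_mul_lcomm: "ps_mul p d F (ps_mul p d G H) = ps_mul p d G (ps_mul p d F H)"
  by (metis ps_mul_assoc ps_mul_comm)

lemma ps_mul_swap4: "ps_mul p d (ps_mul p d A B) (ps_mul p d C D) = ps_mul p d (ps_mul p d A C) (ps_mul p d B D)"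
  by (simp only: ps_mul_assoc ps_mul_lcomm[of p d B C])

lemma ps_pow_add: assumes "p > 0" "F \<in> PS p d"
  shows "ps_pow p d F (m + k) = ps_mul p d (ps_pow p d F m) (ps_pow p d F k)"
proof (induction m)
  case 0 then show ?case using ps_one_mul[OF ps_pow_PS[OF assms]] by simp
next
  case (Suc m) then show ?case by (simp add: ps_mul_assoc)
qed

lemma sum_list_ladd: "length a = length b \<Longrightarrow> sum_list (ladd a b) = sum_list a + sum_list b"
  by (simp add: sum_list_nth sum.distrib)

definition unitv :: "nat \<Rightarrow> nat \<Rightarrow> nat list" where
  "unitv d j = (replicate d 0)[j := 1]"

definition zeta :: "int \<Rightarrow> nat \<Rightarrow> nat \<Rightarrow> pser" where
  "zeta p d j = (\<lambda>a n. if a = unitv d j then 1 mod p ^ n else 0)"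

lemma sum_mod_mult_both: "(\<Sum>x\<in>A. (f x mod (m::int)) * (g x mod m)) mod m = (\<Sum>x\<in>A. f x * g x) mod m"
proof -
  have "(\<Sum>x\<in>A. (f x mod m) * (g x mod m)) mod m = (\<Sum>x\<in>A. ((f x mod m) * (g x mod m)) mod m) mod m"
    by (simp add: mod_sum_eq)
  also have "\<dots> = (\<Sum>x\<in>A. (f x * g x) mod m) mod m" by (simp add: mod_mult_eq)
  also have "\<dots> = (\<Sum>x\<in>A. f x * g x) mod m" by (simp add: mod_sum_eq)
  finally show ?thesis .
qed

context setting
begin

abbreviation phi :: "pser \<Rightarrow> pser" where "phi F \<equiv> subst p d F Z"
abbreviation mon :: "nat list \<Rightarrow> pser" where "mon a \<equiv> mon_prod p d Z a"

lemma mon_mult: assumes "length a = d" "length b = d"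
  shows "mon (ladd a b) = ps_mul p d (mon a) (mon b)"
proof -
  have H: "foldr (\<lambda>j acc. ps_mul p d (ps_pow p d (Z ! j) (ladd a b ! j)) acc) js (ps_one p d) =
     ps_mul p d (foldr (\<lambda>j acc. ps_mul p d (ps_pow p d (Z ! j) (a ! j)) acc) js (ps_one p d))
                (foldr (\<lambda>j acc. ps_mul p d (ps_pow p d (Z ! j) (b ! j)) acc) js (ps_one p d))"
    if "set js \<subseteq> {..<d}" for js
    using that
  proof (induction js)
    case Nil then show ?case using ps_one_mul[OF ps_one_PS[OF p_pos]] by simp
  next
    case (Cons j js)
    then have j: "j < d" and Zj: "Z ! j \<in> PS p d" using ZPS Zlen by (auto simp: nth_mem subset_iff)
    have "ladd a b ! j = a ! j + b ! j" using j assms by simp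
    then show ?case using Cons ps_pow_add[OF p_pos Zj] by (simp add: ps_mul_swap4)
  qed
  have "set [0..<d] \<subseteq> {..<d}" by auto
  from H[OF this] show ?thesis unfolding mon_prod_def .
qed

lemma mon_zero: "mon (replicate d 0) = ps_one p d"
proof -
  have H: "foldr (\<lambda>j acc. ps_mul p d (ps_pow p d (Z ! j) (replicate d 0 ! j)) acc) js (ps_one p d) = ps_one p d"
    if "set js \<subseteq> {..<d}" for js
    using that
  proof (induction js)
    case (Cons j js)
    then show ?case using ps_one_mul[OF ps_one_PS[OF p_pos]] by simp
  qed simp
  have "set [0..<d] \<subseteq> {..<d}" by auto
  from H[OF this] show ?thesis unfolding mon_prod_def .
qed

lemma mon_unit: assumes "j < d" shows "mon (unitv d j) = Z ! j"
proof -
  have Zj: "Z ! j \<in> PS p d" using ZPS Zlen assms by (auto simp: nth_mem subset_iff)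
  have H: "foldr (\<lambda>i acc. ps_mul p d (ps_pow p d (Z ! i) (unitv d j ! i)) acc) js (ps_one p d) =
        (if j \<in> set js then Z ! j else ps_one p d)"
    if "set js \<subseteq> {..<d}" "distinct js" for js
    using that
  proof (induction js)
    case (Cons i js)
    have ui: "unitv d j ! i = (if i = j then 1 else 0)" using Cons(2) assms by (auto simp: unitv_def)
    show ?case
    proof (cases "i = j")
      case True
      then have "j \<notin> set js" using Cons(3) by auto
      then show ?thesis using Cons True ui ps_mul_one[OF Zj] by simp
    next
      case False
      then show ?thesis using Cons ui ps_one_mul[OF Zj] ps_one_mul[OF ps_one_PS[OF p_pos]] by auto
    qed
  qed simp
  have "set [0..<d] \<subseteq> {..<d}" "distinct [0..<d]" by auto
  from H[OF this] show ?thesis unfolding mon_prod_def using assms by simp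
qed

lemma phi_off: "length g \<noteq> d \<Longrightarrow> phi F g n = 0"
  using subst_formula[of n g "n + sum_list g" F] mon_prod_off[OF d_pos] by simp

lemma phi_add: "phi (ps_add p F G) = ps_add p (phi F) (phi G)"
proof (intro ext)
  fix g n
  let ?M = "mons_lt d (n + sum_list g)"
  have "phi (ps_add p F G) g n = (\<Sum>a\<in>?M. ((F a n + G a n) mod p^n) * mon a g n) mod p ^ n"
    by (simp add: subst_formula[OF order_refl] ps_add_def)
  also have "\<dots> = (\<Sum>a\<in>?M. (F a n + G a n) * mon a g n) mod p ^ n" by (rule sum_mod_mult_left)
  also have "\<dots> = ((\<Sum>a\<in>?M. F a n * mon a g n) + (\<Sum>a\<in>?M. G a n * mon a g n)) mod p ^ n"
    by (simp add: distrib_right sum.distrib)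
  also have "\<dots> = ((\<Sum>a\<in>?M. F a n * mon a g n) mod p^n + (\<Sum>a\<in>?M. G a n * mon a g n) mod p^n) mod p ^ n"
    by (rule mod_add_eq[symmetric])
  also have "\<dots> = ps_add p (phi F) (phi G) g n"
    by (simp add: subst_formula[OF order_refl] ps_add_def)
  finally show "phi (ps_add p F G) g n = ps_add p (phi F) (phi G) g n" .
qed

lemma phi_sum: "phi (ps_sum p A G) = ps_sum p A (\<lambda>x. phi (G x))"
proof (intro ext)
  fix g n
  let ?M = "mons_lt d (n + sum_list g)"
  have "phi (ps_sum p A G) g n = (\<Sum>a\<in>?M. ((\<Sum>x\<in>A. G x a n) mod p^n) * mon a g n) mod p ^ n"
    by (simp add: subst_formula[OF order_refl] ps_sum_def)
  also have "\<dots> = (\<Sum>a\<in>?M. (\<Sum>x\<in>A. G x a n) * mon a g n) mod p ^ n" by (rule sum_mod_mult_left)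
  also have "\<dots> = (\<Sum>x\<in>A. \<Sum>a\<in>?M. G x a n * mon a g n) mod p ^ n"
    by (simp add: sum_distrib_right sum.swap[of _ ?M A])
  also have "\<dots> = (\<Sum>x\<in>A. (\<Sum>a\<in>?M. G x a n * mon a g n) mod p ^ n) mod p ^ n"
    by (rule sum_mod_inner[symmetric])
  also have "\<dots> = ps_sum p A (\<lambda>x. phi (G x)) g n"
    by (simp add: subst_formula[OF order_refl] ps_sum_def)
  finally show "phi (ps_sum p A G) g n = ps_sum p A (\<lambda>x. phi (G x)) g n" .
qed

end

context setting
begin

lemma phi_mul: "phi (ps_mul p d F G) = ps_mul p d (phi F) (phi G)"
proof (intro ext)
  fix g n
  show "phi (ps_mul p d F G) g n = ps_mul p d (phi F) (phi G) g n"
  proof (cases "length g = d")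
    case False then show ?thesis by (simp add: phi_off ps_mul_eq)
  next
    case gl: True
    define N where "N = n + sum_list g"
    define M where "M = mons_lt d N"
    define P where "P = {(a,b). length a = d \<and> length b = d \<and> sum_list a + sum_list b < N}"
    define T where "T = (\<lambda>(a,b). F a n * G b n * mon (ladd a b) g n)"
    have finM: "finite M" by (simp add: M_def finite_mons_lt)
    have Mlen: "\<And>a. a \<in> M \<Longrightarrow> length a = d" by (simp add: M_def mons_lt_def)
    have L: "phi (ps_mul p d F G) g n = (\<Sum>x\<in>P. T x) mod p ^ n"
    proof -
      have "phi (ps_mul p d F G) g n = (\<Sum>e\<in>M. ps_mul p d F G e n * mon e g n) mod p ^ n"
        unfolding M_def N_def by (rule subst_formula) simp
      also have "\<dots> = (\<Sum>e\<in>M. (cv d F G e n mod p ^ n) * mon e g n) mod p ^ n"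
        by (intro arg_cong[where f="\<lambda>x. x mod p^n"] sum.cong) (auto simp: ps_mul_eq Mlen)
      also have "\<dots> = (\<Sum>e\<in>M. cv d F G e n * mon e g n) mod p ^ n" by (rule sum_mod_mult_left)
      also have "(\<Sum>e\<in>M. cv d F G e n * mon e g n) = (\<Sum>e\<in>M. \<Sum>a\<in>below d e. F a n * G (lsub e a) n * mon e g n)"
        by (simp add: cv_def sum_distrib_right)
      also have "\<dots> = (\<Sum>(e,a)\<in>Sigma M (below d). F a n * G (lsub e a) n * mon e g n)"
        by (rule sum.Sigma) (auto simp: finM finite_below Mlen)
      also have "\<dots> = (\<Sum>x\<in>P. T x)"
      proof (rule sum.reindex_bij_witness[where j="\<lambda>(e,a). (a, lsub e a)" and i="\<lambda>(a,b). (ladd a b, a)"])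
        fix x assume x: "x \<in> Sigma M (below d)"
        obtain e a where ea: "x = (e,a)" by (cases x)
        have e: "length e = d" "sum_list e < N" using x ea by (auto simp: M_def mons_lt_def)
        have a: "a \<in> below d e" using x ea by auto
        have al: "length a = d" "\<forall>j<d. a ! j \<le> e ! j" using a by (auto simp: below_iff)
        have s: "sum_list a \<le> sum_list e" "sum_list (lsub e a) = sum_list e - sum_list a"
          using below_sum[OF e(1) a] by auto
        have ee: "ladd a (lsub e a) = e" using al e by (auto intro!: nth_equalityI)
        show "(case case x of (e, a) \<Rightarrow> (a, lsub e a) of (a, b) \<Rightarrow> (ladd a b, a)) = x"
          using ea ee by simp
        show "(case x of (e, a) \<Rightarrow> (a, lsub e a)) \<in> P"
          using ea s e al by (auto simp: P_def)
        show "T (case x of (e, a) \<Rightarrow> (a, lsub e a)) = (case x of (e, a) \<Rightarrow> F a n * G (lsub e a) n * mon e g n)"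
          using ea ee by (simp add: T_def)
      next
        fix y assume y: "y \<in> P"
        obtain a b where ab: "y = (a,b)" by (cases y)
        have l: "length a = d" "length b = d" "sum_list a + sum_list b < N" using y ab by (auto simp: P_def)
        show "(case case y of (a, b) \<Rightarrow> (ladd a b, a) of (e, a) \<Rightarrow> (a, lsub e a)) = y"
          using ab l by (auto intro!: nth_equalityI)
        show "(case y of (a, b) \<Rightarrow> (ladd a b, a)) \<in> Sigma M (below d)"
          using ab l by (auto simp: M_def mons_lt_def sum_list_ladd below_iff)
      qed
      finally show ?thesis .
    qed
    have R: "ps_mul p d (phi F) (phi G) g n = (\<Sum>x\<in>P. T x) mod p ^ n"
    proof -
      define X where "X = (\<lambda>c. \<Sum>a\<in>M. F a n * mon a c n)"
      define Y where "Y = (\<lambda>c. \<Sum>b\<in>M. G b n * mon b c n)"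
      have "ps_mul p d (phi F) (phi G) g n = (\<Sum>c\<in>below d g. phi F c n * phi G (lsub g c) n) mod p ^ n"
        using gl by (simp add: ps_mul_eq cv_def)
      also have "\<dots> = (\<Sum>c\<in>below d g. (X c mod p ^ n) * (Y (lsub g c) mod p ^ n)) mod p ^ n"
      proof (intro arg_cong[where f="\<lambda>x. x mod p^n"] sum.cong refl)
        fix c assume c: "c \<in> below d g"
        have s: "sum_list c \<le> sum_list g" "sum_list (lsub g c) = sum_list g - sum_list c"
          using below_sum[OF gl c] by auto
        have "phi F c n = X c mod p ^ n" unfolding X_def M_def
          by (rule subst_formula) (use s N_def in auto)
        moreover have "phi G (lsub g c) n = Y (lsub g c) mod p ^ n" unfolding Y_def M_def
          by (rule subst_formula) (use s N_def in auto)
        ultimately show "phi F c n * phi G (lsub g c) n = (X c mod p ^ n) * (Y (lsub g c) mod p ^ n)" by simp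
      qed
      also have "\<dots> = (\<Sum>c\<in>below d g. X c * Y (lsub g c)) mod p ^ n" by (rule sum_mod_mult_both)
      also have "(\<Sum>c\<in>below d g. X c * Y (lsub g c)) =
          (\<Sum>c\<in>below d g. \<Sum>a\<in>M. \<Sum>b\<in>M. F a n * G b n * (mon a c n * mon b (lsub g c) n))"
        unfolding X_def Y_def sum_product by (simp add: algebra_simps)
      also have "\<dots> = (\<Sum>a\<in>M. \<Sum>b\<in>M. \<Sum>c\<in>below d g. F a n * G b n * (mon a c n * mon b (lsub g c) n))"
        by (simp add: sum.swap[of _ "below d g"] sum.swap[of _ "below d g" M])
      also have "\<dots> = (\<Sum>a\<in>M. \<Sum>b\<in>M. F a n * G b n * cv d (mon a) (mon b) g n)"
        by (simp add: cv_def sum_distrib_left)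
      finally have 1: "ps_mul p d (phi F) (phi G) g n = (\<Sum>a\<in>M. \<Sum>b\<in>M. F a n * G b n * cv d (mon a) (mon b) g n) mod p ^ n" .
      have "(\<Sum>a\<in>M. \<Sum>b\<in>M. F a n * G b n * cv d (mon a) (mon b) g n) mod p ^ n =
            (\<Sum>a\<in>M. \<Sum>b\<in>M. F a n * G b n * (cv d (mon a) (mon b) g n mod p ^ n)) mod p ^ n"
      proof -
        have "(\<Sum>a\<in>M. \<Sum>b\<in>M. F a n * G b n * cv d (mon a) (mon b) g n) =
              (\<Sum>(a,b)\<in>M \<times> M. F a n * G b n * cv d (mon a) (mon b) g n)"
          by (rule sum.cartesian_product)
        moreover have "(\<Sum>a\<in>M. \<Sum>b\<in>M. F a n * G b n * (cv d (mon a) (mon b) g n mod p ^ n)) =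
              (\<Sum>(a,b)\<in>M \<times> M. F a n * G b n * (cv d (mon a) (mon b) g n mod p ^ n))"
          by (rule sum.cartesian_product)
        moreover have "(\<Sum>(a,b)\<in>M \<times> M. F a n * G b n * (cv d (mon a) (mon b) g n mod p ^ n)) mod p ^ n =
              (\<Sum>(a,b)\<in>M \<times> M. F a n * G b n * cv d (mon a) (mon b) g n) mod p ^ n"
          using sum_mod_mult_right[of "\<lambda>(a,b). F a n * G b n" "\<lambda>(a,b). cv d (mon a) (mon b) g n" "p^n" "M \<times> M"]
          by (simp add: case_prod_beta)
        ultimately show ?thesis by simp
      qed
      also have "\<dots> = (\<Sum>a\<in>M. \<Sum>b\<in>M. F a n * G b n * mon (ladd a b) g n) mod p ^ n"
      proof (intro arg_cong[where f="\<lambda>x. x mod p^n"] sum.cong refl)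
        fix a b assume "a \<in> M" "b \<in> M"
        then have "mon (ladd a b) = ps_mul p d (mon a) (mon b)" by (intro mon_mult Mlen)
        then have "mon (ladd a b) g n = cv d (mon a) (mon b) g n mod p ^ n" using gl by (simp add: ps_mul_eq)
        then show "F a n * G b n * (cv d (mon a) (mon b) g n mod p ^ n) = F a n * G b n * mon (ladd a b) g n" by simp
      qed
      also have "(\<Sum>a\<in>M. \<Sum>b\<in>M. F a n * G b n * mon (ladd a b) g n) = (\<Sum>x\<in>M \<times> M. T x)"
        unfolding T_def by (rule sum.cartesian_product)
      also have "\<dots> = (\<Sum>x\<in>P. T x)"
      proof (rule sum.mono_neutral_right)
        show "finite (M \<times> M)" using finM by simp
        show "P \<subseteq> M \<times> M" by (auto simp: P_def M_def mons_lt_def)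
        show "\<forall>x\<in>M \<times> M - P. T x = 0"
        proof
          fix x assume x: "x \<in> M \<times> M - P"
          obtain a b where ab: "x = (a,b)" by (cases x)
          have l: "length a = d" "length b = d" "sum_list a + sum_list b \<ge> N" using x ab Mlen by (auto simp: P_def)
          have "vv p d (mon (ladd a b)) (sum_list (ladd a b))"
            by (rule mon_prod_vv[OF p_pos Zmax Zlen]) (simp add: l)
          then have "mon (ladd a b) g n = 0" using l gl by (auto simp: vv_def sum_list_ladd N_def)
          then show "T x = 0" by (simp add: T_def ab)
        qed
      qed
      finally show ?thesis using 1 by simp
    qed
    show ?thesis using L R by simp
  qed
qed

end

lemma unitv_len[simp]: "length (unitv d j) = d" by (simp add: unitv_def)

lemma unitv_sum: "j < d \<Longrightarrow> sum_list (unitv d j) = 1"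
  by (simp add: unitv_def sum_list_update)

lemma zeta_PS: assumes "p > 0" shows "zeta p d j \<in> PS p d"
  by (rule PS_intro[where E="\<lambda>a n. if a = unitv d j then 1 else 0"])
     (auto simp: zeta_def compat_def assms)

lemma zeta_max: assumes "p > 0" "j < d" shows "zeta p d j \<in> PSmax p d"
proof -
  have "unitv d j \<noteq> replicate d 0"
    using unitv_sum[OF assms(2)] by (metis sum_list_replicate mult_0_right zero_neq_one)
  then show ?thesis using zeta_PS[OF assms(1)] by (simp add: PSmax_def zeta_def)
qed

context setting
begin

lemma phi_one: "phi (ps_one p d) = ps_one p d"
proof (intro ext)
  fix g n
  show "phi (ps_one p d) g n = ps_one p d g n"
  proof (cases "length g = d")
    case False then show ?thesis by (auto simp: phi_off ps_one_def)
  next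
    case True
    let ?M = "mons_lt d (Suc (n + sum_list g))"
    have "phi (ps_one p d) g n = (\<Sum>a\<in>?M. ps_one p d a n * mon a g n) mod p ^ n"
      by (rule subst_formula) simp
    also have "(\<Sum>a\<in>?M. ps_one p d a n * mon a g n) = (\<Sum>a\<in>?M. if a = replicate d 0 then (1 mod p^n) * mon a g n else 0)"
      by (intro sum.cong) (auto simp: ps_one_def)
    also have "\<dots> = (1 mod p^n) * mon (replicate d 0) g n"
      by (subst sum.delta) (auto simp: finite_mons_lt[unfolded mons_lt_def] mons_lt_def sum_list_replicate)
    finally show ?thesis using mon_zero PS_mod[OF ps_one_PS[OF p_pos]]
      by (simp add: mod_mult_left_eq)
  qed
qed

lemma phi_zeta: assumes j: "j < d" shows "phi (zeta p d j) = Z ! j"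
proof (intro ext)
  fix g n
  have Zj: "Z ! j \<in> PS p d" using ZPS Zlen j by (auto simp: nth_mem subset_iff)
  let ?M = "mons_lt d (Suc (Suc (n + sum_list g)))"
  have "phi (zeta p d j) g n = (\<Sum>a\<in>?M. zeta p d j a n * mon a g n) mod p ^ n"
    by (rule subst_formula) simp
  also have "(\<Sum>a\<in>?M. zeta p d j a n * mon a g n) = (\<Sum>a\<in>?M. if a = unitv d j then (1 mod p^n) * mon a g n else 0)"
    by (intro sum.cong) (auto simp: zeta_def)
  also have "\<dots> = (1 mod p^n) * mon (unitv d j) g n"
    by (subst sum.delta) (auto simp: finite_mons_lt[unfolded mons_lt_def] mons_lt_def unitv_sum j)
  finally show "phi (zeta p d j) g n = (Z ! j) g n" using mon_unit[OF j] PS_mod[OF Zj]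
    by (simp add: mod_mult_left_eq)
qed

lemma mons_lt_1: "mons_lt d (Suc 0) = {replicate d 0}"
  by (auto simp: mons_lt_def intro: sum_list_zero_replicate)

lemma phi_const: assumes "F \<in> PS p d" shows "phi F (replicate d 0) 1 = F (replicate d 0) 1"
proof -
  have "phi F (replicate d 0) 1 = (\<Sum>a\<in>mons_lt d (Suc 0). F a 1 * mon a (replicate d 0) 1) mod p ^ 1"
    by (rule subst_formula) simp
  also have "\<dots> = (F (replicate d 0) 1 * (1 mod p)) mod p"
    by (simp add: mons_lt_1 mon_zero ps_one_def)
  also have "\<dots> = F (replicate d 0) 1"
    using PS_mod[OF assms, of "replicate d 0" 1] by (simp add: mod_mult_right_eq)
  finally show ?thesis .
qed

end

fun lexl :: "nat list \<Rightarrow> nat list \<Rightarrow> bool" where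
  "lexl (x # xs) (y # ys) = (x < y \<or> (x = y \<and> lexl xs ys))"
| "lexl _ _ = False"

lemma lexl_irrefl: "\<not> lexl xs xs"
  by (induction xs) auto

lemma lexl_trans: "lexl xs ys \<Longrightarrow> lexl ys zs \<Longrightarrow> lexl xs zs"
proof (induction xs arbitrary: ys zs)
  case Nil then show ?case by simp
next
  case (Cons x xs)
  then obtain y ys' where ys: "ys = y # ys'" by (cases ys) auto
  with Cons obtain z zs' where zs: "zs = z # zs'" by (cases zs) auto
  show ?case using Cons ys zs by auto
qed

lemma lexl_total: "length xs = length ys \<Longrightarrow> xs = ys \<or> lexl xs ys \<or> lexl ys xs"
proof (induction xs arbitrary: ys)
  case Nil then show ?case by simp
next
  case (Cons x xs)
  then obtain y ys' where ys: "ys = y # ys'" by (cases ys) auto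
  show ?case using Cons.IH[of ys'] Cons.prems ys by auto
qed

lemma ladd_Cons: "ladd (x # xs) (y # ys) = (x + y) # ladd xs ys"
  by (simp add: ladd_def)

lemma lexl_add: "length xs = length zs \<Longrightarrow> length ys = length zs \<Longrightarrow> lexl xs ys \<Longrightarrow> lexl (ladd xs zs) (ladd ys zs)"
proof (induction xs arbitrary: ys zs)
  case Nil then show ?case by simp
next
  case (Cons x xs)
  obtain y ys' where ys: "ys = y # ys'" using Cons.prems(3) by (cases ys) auto
  obtain z zs' where zs: "zs = z # zs'" using Cons.prems(1) by (cases zs) auto
  have l: "length xs = length zs'" "length ys' = length zs'" using Cons.prems ys zs by auto
  have h: "x < y \<or> (x = y \<and> lexl xs ys')" using Cons.prems(3) ys by simp
  show ?case
  proof (cases "x < y")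
    case True then show ?thesis using ys zs by (simp add: ladd_Cons)
  next
    case False
    then have "x = y" "lexl xs ys'" using h by auto
    then have "lexl (ladd xs zs') (ladd ys' zs')" using Cons.IH l by blast
    then show ?thesis using ys zs \<open>x = y\<close> by (simp add: ladd_Cons)
  qed
qed

lemma ladd_comm: "ladd a b = ladd b a"
  by (rule nth_equalityI) auto

lemma lexl_min_exists: "S \<noteq> {} \<Longrightarrow> (\<forall>x\<in>S. length x = d) \<Longrightarrow> \<exists>m\<in>S. \<forall>x\<in>S. \<not> lexl x m"
proof (induction d arbitrary: S)
  case 0
  then obtain m where "m \<in> S" by auto
  then show ?case using 0 by (intro bexI[of _ m]) auto
next
  case (Suc d)
  define h where "h = (LEAST h. \<exists>x\<in>S. hd x = h)"
  obtain x0 where x0: "x0 \<in> S" using Suc.prems(1) by auto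
  have hex: "\<exists>x\<in>S. hd x = h" unfolding h_def by (rule LeastI[of _ "hd x0"]) (use x0 in auto)
  have hmin: "\<And>x. x \<in> S \<Longrightarrow> h \<le> hd x" unfolding h_def by (rule Least_le) auto
  define S' where "S' = tl ` {x\<in>S. hd x = h}"
  have "S' \<noteq> {}" using hex by (auto simp: S'_def)
  moreover have "\<forall>x\<in>S'. length x = d" using Suc.prems(2) by (auto simp: S'_def)
  ultimately obtain m' where m': "m' \<in> S'" "\<forall>x\<in>S'. \<not> lexl x m'" using Suc.IH by blast
  then obtain y where y: "y \<in> S" "hd y = h" "tl y = m'" by (auto simp: S'_def)
  have ylen: "length y = Suc d" using Suc.prems(2) y by auto
  then have yeq: "y = h # m'" using y by (cases y) auto
  show ?case
  proof (rule bexI[of _ y])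
    show "\<forall>x\<in>S. \<not> lexl x y"
    proof
      fix x assume x: "x \<in> S"
      then have "length x = Suc d" using Suc.prems(2) by auto
      then obtain a as where xa: "x = a # as" by (cases x) auto
      have "h \<le> a" using hmin[OF x] xa by simp
      moreover have "a = h \<Longrightarrow> as \<in> S'" using x xa by (force simp: S'_def)
      ultimately show "\<not> lexl x y" using m'(2) xa yeq by auto
    qed
  qed (rule y(1))
qed

lemma zp_nonzero_mod: assumes "x \<in> Zp p" "x m \<noteq> 0" "m \<le> N" shows "\<not> p ^ m dvd x N"
  using zp_mod[OF assms(1,3)] assms(2) by (simp add: mod_eq_0_iff_dvd[symmetric])

lemma ps_domain:
  assumes p: "prime p" and F: "F \<in> PS p d" and G: "G \<in> PS p d" and FG: "ps_mul p d F G = ps_zero"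
  shows "F = ps_zero \<or> G = ps_zero"
proof (rule ccontr)
  assume "\<not> (F = ps_zero \<or> G = ps_zero)"
  then have nF: "F \<noteq> ps_zero" and nG: "G \<noteq> ps_zero" by auto
  have p0: "p > 0" using p by (simp add: prime_gt_0_int)
  have val: "\<exists>k S. (\<forall>a. H a k = 0) \<and> S = {a. H a (Suc k) \<noteq> 0} \<and> S \<noteq> {} \<and> (\<forall>x\<in>S. length x = d)"
    if H: "H \<in> PS p d" "H \<noteq> ps_zero" for H
  proof -
    obtain a n where an: "H a n \<noteq> 0" using H(2) by (auto simp: ps_zero_def fun_eq_iff)
    then have "n \<noteq> 0" using PS_zero_level[OF H(1), of a] by (cases n) auto
    then obtain n' where n': "n = Suc n'" by (cases n) auto
    define k where "k = (LEAST k. \<exists>a. H a (Suc k) \<noteq> 0)"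
    have k1: "\<exists>a. H a (Suc k) \<noteq> 0" unfolding k_def by (rule LeastI[of _ n']) (use an n' in auto)
    have k2: "\<forall>a. H a k = 0"
    proof (cases k)
      case 0 then show ?thesis using PS_zero_level[OF H(1)] by auto
    next
      case (Suc k')
      then have "k' < k" by simp
      then have "\<not> (\<exists>a. H a (Suc k') \<noteq> 0)" unfolding k_def using not_less_Least by blast
      then show ?thesis using Suc by auto
    qed
    have "\<forall>x\<in>{a. H a (Suc k) \<noteq> 0}. length x = d" using PS_off[OF H(1)] by auto
    then show ?thesis using k1 k2 by blast
  qed
  obtain k SF where k: "\<forall>a. F a k = 0" "SF = {a. F a (Suc k) \<noteq> 0}" "SF \<noteq> {}" "\<forall>x\<in>SF. length x = d"
    using val[OF F nF] by blast
  obtain l SG where l: "\<forall>a. G a l = 0" "SG = {a. G a (Suc l) \<noteq> 0}" "SG \<noteq> {}" "\<forall>x\<in>SG. length x = d"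
    using val[OF G nG] by blast
  obtain a0 where a0: "a0 \<in> SF" "\<forall>x\<in>SF. \<not> lexl x a0" using lexl_min_exists[OF k(3,4)] by blast
  obtain b0 where b0: "b0 \<in> SG" "\<forall>x\<in>SG. \<not> lexl x b0" using lexl_min_exists[OF l(3,4)] by blast
  have a0l: "length a0 = d" and b0l: "length b0 = d" using a0 b0 k l by auto
  define g where "g = ladd a0 b0"
  define N where "N = k + l + 1"
  have gl: "length g = d" using a0l b0l by (simp add: g_def)
  have Fdvd: "p ^ k dvd F b N" for b
  proof -
    have "F b N mod p ^ k = F b k" by (rule PS_mod_le[OF F]) (simp add: N_def)
    then show ?thesis using k(1) by (simp add: mod_eq_0_iff_dvd)
  qed
  have Gdvd: "p ^ l dvd G b N" for b
  proof -
    have "G b N mod p ^ l = G b l" by (rule PS_mod_le[OF G]) (simp add: N_def)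
    then show ?thesis using l(1) by (simp add: mod_eq_0_iff_dvd)
  qed
  have Fdvd1: "p ^ Suc k dvd F b N" if "b \<notin> SF" for b
  proof -
    have "F b N mod p ^ Suc k = F b (Suc k)" by (rule PS_mod_le[OF F]) (simp add: N_def)
    then show ?thesis using k(2) that by (simp add: mod_eq_0_iff_dvd)
  qed
  have Gdvd1: "p ^ Suc l dvd G b N" if "b \<notin> SG" for b
  proof -
    have "G b N mod p ^ Suc l = G b (Suc l)" by (rule PS_mod_le[OF G]) (simp add: N_def)
    then show ?thesis using l(2) that by (simp add: mod_eq_0_iff_dvd)
  qed
  have a0b: "a0 \<in> below d g" using a0l b0l by (auto simp: below_iff g_def)
  have ga0: "lsub g a0 = b0" using a0l b0l by (auto simp: g_def intro!: nth_equalityI)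
  have other: "p ^ N dvd F b N * G (lsub g b) N" if b: "b \<in> below d g" "b \<noteq> a0" for b
  proof (cases "b \<in> SF \<and> lsub g b \<in> SG")
    case True
    have bl: "length b = d" using b by (simp add: below_iff)
    have "\<not> lexl b a0" using a0(2) True by auto
    then have "lexl a0 b" using lexl_total[of a0 b] a0l bl b(2) by auto
    have cb: "ladd b (lsub g b) = g" using b gl by (auto simp: below_iff intro!: nth_equalityI)
    have cl: "length (lsub g b) = d" using gl bl by simp
    have "\<not> lexl (lsub g b) b0" using b0(2) True by auto
    then have "lsub g b = b0 \<or> lexl b0 (lsub g b)" using lexl_total[of b0 "lsub g b"] cl b0l by auto
    then have False
    proof
      assume "lsub g b = b0"
      then have "ladd b b0 = ladd a0 b0" using cb by (simp add: g_def)
      then have e: "\<And>i. i < d \<Longrightarrow> ladd b b0 ! i = ladd a0 b0 ! i" by simp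
      have "b = a0"
      proof (rule nth_equalityI)
        show "length b = length a0" using bl a0l by simp
        fix i assume "i < length b"
        then show "b ! i = a0 ! i" using e[of i] bl a0l b0l by simp
      qed
      then show False using b(2) by simp
    next
      assume h: "lexl b0 (lsub g b)"
      have "lexl (ladd a0 b0) (ladd b b0)" by (rule lexl_add) (use a0l bl b0l \<open>lexl a0 b\<close> in auto)
      moreover have "lexl (ladd b0 b) (ladd (lsub g b) b)" by (rule lexl_add) (use b0l cl bl h in auto)
      ultimately have "lexl (ladd a0 b0) (ladd (lsub g b) b)"
        using ladd_comm[of b0 b] lexl_trans[of "ladd a0 b0" "ladd b b0" "ladd (lsub g b) b"] by simp
      then have "lexl g g" using cb ladd_comm[of "lsub g b" b] by (simp add: g_def)
      then show False using lexl_irrefl by blast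
    qed
    then show ?thesis ..
  next
    case False
    then have "b \<notin> SF \<or> lsub g b \<notin> SG" by simp
    then show ?thesis
    proof
      assume "b \<notin> SF"
      then have "p ^ Suc k * p ^ l dvd F b N * G (lsub g b) N" by (intro mult_dvd_mono Fdvd1 Gdvd)
      moreover have "p ^ Suc k * p ^ l = p ^ N" by (simp add: N_def power_add[symmetric])
      ultimately show ?thesis by simp
    next
      assume "lsub g b \<notin> SG"
      then have "p ^ k * p ^ Suc l dvd F b N * G (lsub g b) N" by (intro mult_dvd_mono Fdvd Gdvd1)
      moreover have "p ^ k * p ^ Suc l = p ^ N" by (simp add: N_def power_add[symmetric])
      ultimately show ?thesis by simp
    qed
  qed
  have "ps_mul p d F G g N = 0" using FG by (simp add: ps_zero_def)
  then have "cv d F G g N mod p ^ N = 0" using gl by (simp add: ps_mul_eq)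
  then have cvd: "p ^ N dvd cv d F G g N" by (simp add: mod_eq_0_iff_dvd)
  have "cv d F G g N = F a0 N * G b0 N + (\<Sum>b\<in>below d g - {a0}. F b N * G (lsub g b) N)"
    unfolding cv_def using a0b ga0 by (simp add: sum.remove[OF finite_below[OF gl]])
  moreover have "p ^ N dvd (\<Sum>b\<in>below d g - {a0}. F b N * G (lsub g b) N)"
    by (intro dvd_sum other) auto
  ultimately have "p ^ N dvd F a0 N * G b0 N" using cvd by (simp add: dvd_add_left_iff)
  obtain u where u: "F a0 N = p ^ k * u" using Fdvd by (auto elim: dvdE)
  obtain w where w: "G b0 N = p ^ l * w" using Gdvd by (auto elim: dvdE)
  have nu: "\<not> p dvd u"
  proof
    assume "p dvd u"
    then have "p ^ Suc k dvd F a0 N" using u by (simp add: mult_dvd_mono)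
    moreover have "\<not> p ^ Suc k dvd F a0 N"
      by (rule zp_nonzero_mod[OF PS_Zp[OF F a0l]]) (use a0 k in \<open>auto simp: N_def\<close>)
    ultimately show False by simp
  qed
  have nw: "\<not> p dvd w"
  proof
    assume "p dvd w"
    then have "p ^ Suc l dvd G b0 N" using w by (simp add: mult_dvd_mono)
    moreover have "\<not> p ^ Suc l dvd G b0 N"
      by (rule zp_nonzero_mod[OF PS_Zp[OF G b0l]]) (use b0 l in \<open>auto simp: N_def\<close>)
    ultimately show False by simp
  qed
  have "p ^ (k + l) * p dvd p ^ (k + l) * (u * w)"
    using \<open>p ^ N dvd F a0 N * G b0 N\<close> u w by (simp add: N_def power_add mult_ac)
  then have "p dvd u * w" using p0 by (subst (asm) dvd_times_left_cancel_iff) auto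
  then show False using nu nw p by (simp add: prime_dvd_mult_iff)
qed

definition zc :: "nat \<Rightarrow> nat list \<Rightarrow> bool" where
  "zc k a \<longleftrightarrow> (\<forall>j<k. a ! j = 0)"

definition proj :: "nat \<Rightarrow> pser \<Rightarrow> pser" where
  "proj k F = (\<lambda>a n. if zc k a then F a n else 0)"

lemma proj_PS: assumes "p > 0" "F \<in> PS p d" shows "proj k F \<in> PS p d"
proof -
  have z: "(\<lambda>n. 0) \<in> Zp p" using assms(1) by (simp add: Zp_def)
  have "(\<lambda>n. if zc k a then F a n else 0) \<in> Zp p" if "length a = d" for a
    using assms(2) z that by (cases "zc k a") (auto simp: PS_def)
  then show ?thesis using assms(2) unfolding PS_def proj_def by auto
qed

lemma proj_add: "proj k (ps_add p F G) = ps_add p (proj k F) (proj k G)"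
  by (intro ext) (simp add: proj_def ps_add_def)

lemma proj_neg: "proj k (ps_neg p F) = ps_neg p (proj k F)"
  by (intro ext) (simp add: proj_def ps_neg_def)

lemma proj_zero: "proj k ps_zero = ps_zero"
  by (intro ext) (simp add: proj_def ps_zero_def)

lemma proj_sum: "proj k (ps_sum p A G) = ps_sum p A (\<lambda>x. proj k (G x))"
  by (intro ext) (simp add: proj_def ps_sum_def)

lemma proj_idem: "proj k (proj k F) = proj k F"
  by (intro ext) (simp add: proj_def)

lemma proj_0: "proj 0 F = F"
  by (intro ext) (simp add: proj_def zc_def)

lemma proj_const: "k \<le> d \<Longrightarrow> proj k F (replicate d 0) n = F (replicate d 0) n"
  by (simp add: proj_def zc_def nth_replicate)

lemma ps_sum_zero: "ps_sum p A (\<lambda>x. ps_zero) = ps_zero"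
  by (intro ext) (simp add: ps_sum_def ps_zero_def)

lemma proj_mul: assumes "k \<le> d" shows "proj k (ps_mul p d F G) = ps_mul p d (proj k F) (proj k G)"
proof (intro ext)
  fix a n
  show "proj k (ps_mul p d F G) a n = ps_mul p d (proj k F) (proj k G) a n"
  proof (cases "length a = d")
    case False then show ?thesis by (simp add: proj_def ps_mul_eq)
  next
    case al: True
    show ?thesis
    proof (cases "zc k a")
      case True
      have "cv d (proj k F) (proj k G) a n = cv d F G a n"
        unfolding cv_def
      proof (intro sum.cong refl)
        fix b assume b: "b \<in> below d a"
        then have "zc k b" "zc k (lsub a b)" using True assms al
          by (auto simp: below_iff zc_def) (metis le_zero_eq less_le_trans not_le)
        then show "proj k F b n * proj k G (lsub a b) n = F b n * G (lsub a b) n"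
          by (simp add: proj_def)
      qed
      then show ?thesis using True al by (simp add: proj_def ps_mul_eq)
    next
      case False
      then obtain j where j: "j < k" "a ! j \<noteq> 0" by (auto simp: zc_def)
      have "cv d (proj k F) (proj k G) a n = 0"
        unfolding cv_def
      proof (intro sum.neutral ballI)
        fix b assume b: "b \<in> below d a"
        have bl: "length b = d" using b by (simp add: below_iff)
        show "proj k F b n * proj k G (lsub a b) n = 0"
        proof (cases "b ! j = 0")
          case True
          then have "lsub a b ! j \<noteq> 0" using j assms al bl by simp
          then show ?thesis using j by (auto simp: proj_def zc_def)
        next
          case False then show ?thesis using j by (auto simp: proj_def zc_def)
        qed
      qed
      then show ?thesis using False al by (simp add: proj_def ps_mul_eq)
    qed
  qed
qed

lemma unitv_nth: "i < d \<Longrightarrow> unitv d j ! i = (if i = j then 1 else 0)"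
  by (auto simp: unitv_def nth_list_update)

lemma proj_zeta: assumes "j < k" "k \<le> d" shows "proj k (zeta p d j) = ps_zero"
proof (intro ext)
  fix a n
  have "\<not> zc k (unitv d j)" using assms by (auto simp: zc_def unitv_nth intro!: exI[of _ j])
  then show "proj k (zeta p d j) a n = ps_zero a n" by (auto simp: proj_def zeta_def ps_zero_def)
qed

lemma proj_one: "k \<le> d \<Longrightarrow> proj k (ps_one p d) = ps_one p d"
  by (intro ext) (auto simp: proj_def ps_one_def zc_def)

definition zideal :: "int \<Rightarrow> nat \<Rightarrow> nat \<Rightarrow> pser set" where
  "zideal p d k = {F. \<exists>A. (\<forall>j<k. A j \<in> PS p d) \<and> F = ps_sum p {..<k} (\<lambda>j. ps_mul p d (A j) (zeta p d j))}"

lemma zker1: assumes "k \<le> d" "F \<in> zideal p d k" shows "proj k F = ps_zero"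
proof -
  obtain A where A: "F = ps_sum p {..<k} (\<lambda>j. ps_mul p d (A j) (zeta p d j))"
    using assms(2) by (auto simp: zideal_def)
  have "proj k F = ps_sum p {..<k} (\<lambda>j. ps_mul p d (proj k (A j)) (proj k (zeta p d j)))"
    by (simp add: A proj_sum proj_mul assms(1))
  also have "\<dots> = ps_sum p {..<k} (\<lambda>j. ps_zero)"
    unfolding ps_sum_def by (intro ext) (simp add: proj_zeta assms(1) ps_mul_zero)
  finally show ?thesis by (simp add: ps_sum_zero)
qed

lemma lsub_unit_iff: assumes al: "length a = d" and b: "b \<in> below d a" and j: "j < d"
  shows "lsub a b = unitv d j \<longleftrightarrow> (1 \<le> a ! j \<and> b = lsub a (unitv d j))"
proof -
  have bl: "length b = d" and le: "\<forall>i<d. b ! i \<le> a ! i" using b by (auto simp: below_iff)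
  show ?thesis
  proof
    assume h: "lsub a b = unitv d j"
    have hi: "a ! i - b ! i = (if i = j then 1 else 0)" if "i < d" for i
      using arg_cong[OF h, of "\<lambda>x. x ! i"] that al bl by (simp add: unitv_nth)
    have "1 \<le> a ! j" using hi[OF j] by (cases "a ! j") auto
    moreover have "b = lsub a (unitv d j)"
    proof (rule nth_equalityI)
      show "length b = length (lsub a (unitv d j))" using al bl by simp
      fix i assume "i < length b"
      then have i: "i < d" using bl by simp
      show "b ! i = lsub a (unitv d j) ! i"
        using hi[OF i] le i al by (auto simp: unitv_nth split: if_splits)
    qed
    ultimately show "1 \<le> a ! j \<and> b = lsub a (unitv d j)" by simp
  next
    assume h: "1 \<le> a ! j \<and> b = lsub a (unitv d j)"
    show "lsub a b = unitv d j"
      by (rule nth_equalityI) (use h al in \<open>auto simp: unitv_nth\<close>)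
  qed
qed

lemma cv_zeta: assumes al: "length a = d" and j: "j < d"
  shows "cv d H (zeta p d j) a n = (if 1 \<le> a ! j then H (lsub a (unitv d j)) n * (1 mod p ^ n) else 0)"
proof -
  have "cv d H (zeta p d j) a n = (\<Sum>b\<in>below d a. if b = lsub a (unitv d j) then (if 1 \<le> a ! j then H b n * (1 mod p ^ n) else 0) else 0)"
    unfolding cv_def
  proof (intro sum.cong refl)
    fix b assume b: "b \<in> below d a"
    show "H b n * zeta p d j (lsub a b) n = (if b = lsub a (unitv d j) then (if 1 \<le> a ! j then H b n * (1 mod p ^ n) else 0) else 0)"
      using lsub_unit_iff[OF al b j] by (auto simp: zeta_def)
  qed
  also have "\<dots> = (if 1 \<le> a ! j then H (lsub a (unitv d j)) n * (1 mod p ^ n) else 0)"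
    by (subst sum.delta) (auto simp: finite_below al below_iff)
  finally show ?thesis .
qed

lemma zc_lsub_unit: assumes "length a = d" "j < d" shows "zc j (lsub a (unitv d j)) = zc j a"
  using assms by (auto simp: zc_def unitv_nth)

lemma ladd_lsub_unit: assumes "length a = d" "j < d" "1 \<le> a ! j"
  shows "ladd (lsub a (unitv d j)) (unitv d j) = a"
  by (rule nth_equalityI) (use assms in \<open>auto simp: unitv_nth\<close>)

lemma zker2: assumes p: "p > 0" and k: "k \<le> d" and F: "F \<in> PS p d" and pF: "proj k F = ps_zero"
  shows "F \<in> zideal p d k"
proof -
  define A where "A = (\<lambda>j b n. if length b = d \<and> zc j b then F (ladd b (unitv d j)) n else 0)"
  have z: "(\<lambda>n. 0) \<in> Zp p" using p by (simp add: Zp_def)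
  have AP: "A j \<in> PS p d" for j
  proof -
    have "A j b \<in> Zp p" if "length b = d" for b
    proof (cases "zc j b")
      case True
      then have "A j b = F (ladd b (unitv d j))" using that by (simp add: A_def fun_eq_iff)
      then show ?thesis using PS_Zp[OF F] that by simp
    next
      case False then show ?thesis using z by (simp add: A_def)
    qed
    moreover have "A j b = (\<lambda>n. 0)" if "length b \<noteq> d" for b using that by (simp add: A_def fun_eq_iff)
    ultimately show ?thesis by (simp add: PS_def)
  qed
  have mz: "ps_mul p d (A j) (zeta p d j) a n = (if 1 \<le> a ! j \<and> zc j a then F a n else 0)"
    if al: "length a = d" and j: "j < d" for a n j
  proof (cases "1 \<le> a ! j")
    case True
    have "ps_mul p d (A j) (zeta p d j) a n = (A j (lsub a (unitv d j)) n * (1 mod p ^ n)) mod p ^ n"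
      using al j True by (simp add: ps_mul_eq cv_zeta)
    also have "A j (lsub a (unitv d j)) n = (if zc j a then F a n else 0)"
      using al j True by (simp add: A_def zc_lsub_unit ladd_lsub_unit)
    finally show ?thesis using True PS_mod[OF F] by (auto simp: mod_mult_right_eq)
  next
    case False then show ?thesis using al j by (simp add: ps_mul_eq cv_zeta)
  qed
  have "F = ps_sum p {..<k} (\<lambda>j. ps_mul p d (A j) (zeta p d j))"
  proof (intro ext)
    fix a n
    show "F a n = ps_sum p {..<k} (\<lambda>j. ps_mul p d (A j) (zeta p d j)) a n"
    proof (cases "length a = d")
      case False then show ?thesis using PS_off[OF F False] by (simp add: ps_sum_def ps_mul_eq)
    next
      case al: True
      have "ps_sum p {..<k} (\<lambda>j. ps_mul p d (A j) (zeta p d j)) a n =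
            (\<Sum>j<k. if 1 \<le> a ! j \<and> zc j a then F a n else 0) mod p ^ n"
        unfolding ps_sum_def using al k by (simp add: mz)
      also have "\<dots> = F a n"
      proof (cases "zc k a")
        case True
        have "proj k F a n = 0" using pF by (simp add: ps_zero_def)
        then have "F a n = 0" using True by (simp add: proj_def)
        moreover have "(\<Sum>j<k. if 1 \<le> a ! j \<and> zc j a then F a n else 0) = 0"
          using True by (intro sum.neutral) (auto simp: zc_def)
        ultimately show ?thesis by simp
      next
        case False
        define j0 where "j0 = (LEAST j. a ! j \<noteq> 0)"
        obtain j1 where j1: "j1 < k" "a ! j1 \<noteq> 0" using False by (auto simp: zc_def)
        have j0a: "a ! j0 \<noteq> 0" unfolding j0_def by (rule LeastI[of _ j1]) (use j1 in auto)
        have j0k: "j0 < k" using Least_le[of "\<lambda>j. a ! j \<noteq> 0" j1] j1 unfolding j0_def by simp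
        have j0z: "zc j0 a" unfolding zc_def j0_def using not_less_Least by blast
        have "(\<Sum>j<k. if 1 \<le> a ! j \<and> zc j a then F a n else 0) = (\<Sum>j<k. if j = j0 then F a n else 0)"
        proof (intro sum.cong refl)
          fix j assume "j \<in> {..<k}"
          have "(1 \<le> a ! j \<and> zc j a) \<longleftrightarrow> j = j0"
          proof
            assume h: "1 \<le> a ! j \<and> zc j a"
            have "\<not> j < j0" using h j0z by (auto simp: zc_def)
            moreover have "\<not> j0 < j" using h j0a by (auto simp: zc_def)
            ultimately show "j = j0" by simp
          qed (use j0a j0z in auto)
          then show "(if 1 \<le> a ! j \<and> zc j a then F a n else 0) = (if j = j0 then F a n else 0)" by simp
        qed
        also have "\<dots> = F a n" using j0k by simp
        finally show ?thesis using PS_mod[OF F] by simp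
      qed
      finally show ?thesis by simp
    qed
  qed
  then show ?thesis unfolding zideal_def using AP by (intro CollectI exI[of _ A]) auto
qed

lemma ps_sum_cong: "(\<And>x. x \<in> A \<Longrightarrow> G x = G' x) \<Longrightarrow> ps_sum p A G = ps_sum p A G'"
  unfolding ps_sum_def by (intro ext) (simp cong: sum.cong)

lemma ps_sum_empty: "ps_sum p {} G = ps_zero"
  by (simp add: ps_sum_def ps_zero_def fun_eq_iff)

lemma gen_ideal_iff: "x \<in> gen_ideal p d L \<longleftrightarrow>
   (\<exists>A. (\<forall>j<length L. A j \<in> PS p d) \<and> x = ps_sum p {..<length L} (\<lambda>j. ps_mul p d (A j) (L ! j)))"
  by (simp add: gen_ideal_def)

locale base = setting +
  assumes bij: "bij_betw (\<lambda>F. subst p d F Z) (PS p d) (PS p d)"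
begin

definition psi :: "pser \<Rightarrow> pser" where "psi = inv_into (PS p d) (\<lambda>F. subst p d F Z)"

lemma phi_PS: "F \<in> PS p d \<Longrightarrow> phi F \<in> PS p d"
  using bij by (auto simp: bij_betw_def)

lemma img: "(\<lambda>F. subst p d F Z) ` PS p d = PS p d"
  using bij by (simp add: bij_betw_def)

lemma psi_PS: "x \<in> PS p d \<Longrightarrow> psi x \<in> PS p d"
  unfolding psi_def by (rule inv_into_into[where f="\<lambda>F. subst p d F Z" and A="PS p d"]) (simp add: img)

lemma phi_psi: "x \<in> PS p d \<Longrightarrow> phi (psi x) = x"
  unfolding psi_def by (rule f_inv_into_f[where f="\<lambda>F. subst p d F Z" and A="PS p d"]) (simp add: img)

lemma psi_phi: "F \<in> PS p d \<Longrightarrow> psi (phi F) = F"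
  unfolding psi_def by (rule inv_into_f_f[where f="\<lambda>F. subst p d F Z" and A="PS p d"]) (use bij in \<open>simp_all add: bij_betw_def\<close>)

lemma psi_eqI: "F \<in> PS p d \<Longrightarrow> phi F = x \<Longrightarrow> psi x = F"
  using psi_phi by blast

lemma psi_mul: "x \<in> PS p d \<Longrightarrow> y \<in> PS p d \<Longrightarrow> psi (ps_mul p d x y) = ps_mul p d (psi x) (psi y)"
  by (rule psi_eqI) (simp_all add: ps_mul_PS p_pos psi_PS phi_mul phi_psi)

lemma psi_add: "x \<in> PS p d \<Longrightarrow> y \<in> PS p d \<Longrightarrow> psi (ps_add p x y) = ps_add p (psi x) (psi y)"
  by (rule psi_eqI) (simp_all add: ps_add_PS p_pos psi_PS phi_add phi_psi)

lemma phi_zero: "phi ps_zero = ps_zero"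
  using phi_sum[of "{}" "\<lambda>x. x"] by (simp add: ps_sum_empty)

lemma psi_zero: "psi ps_zero = ps_zero"
  by (rule psi_eqI) (simp_all add: ps_zero_PS p_pos phi_zero)

lemma psi_one: "psi (ps_one p d) = ps_one p d"
  by (rule psi_eqI) (simp_all add: ps_one_PS p_pos phi_one)

lemma psi_Z: "j < d \<Longrightarrow> psi (Z ! j) = zeta p d j"
  by (rule psi_eqI) (simp_all add: zeta_PS p_pos phi_zeta)

lemma psi_const: "x \<in> PS p d \<Longrightarrow> psi x (replicate d 0) 1 = x (replicate d 0) 1"
  using phi_const[OF psi_PS, of x] phi_psi by simp

lemma phi_inj: assumes "F \<in> PS p d" "G \<in> PS p d" "phi F = phi G" shows "F = G"
proof -
  have "psi (phi F) = psi (phi G)" using assms(3) by (rule arg_cong)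
  then show ?thesis unfolding psi_phi[OF assms(1)] psi_phi[OF assms(2)] .
qed

lemma transport: assumes k: "k \<le> d" and x: "x \<in> PS p d"
  shows "x \<in> gen_ideal p d (take k Z) \<longleftrightarrow> proj k (psi x) = ps_zero"
proof
  have lt: "length (take k Z) = k" using k Zlen by simp
  assume "x \<in> gen_ideal p d (take k Z)"
  from this[unfolded gen_ideal_iff lt] obtain A where
    A: "\<forall>j<k. A j \<in> PS p d" "x = ps_sum p {..<k} (\<lambda>j. ps_mul p d (A j) (take k Z ! j))"
    by blast
  define Y where "Y = ps_sum p {..<k} (\<lambda>j. ps_mul p d (psi (A j)) (zeta p d j))"
  have YP: "Y \<in> PS p d" unfolding Y_def
    by (intro ps_sum_PS p_pos ps_mul_PS psi_PS zeta_PS) (use A in auto)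
  have "phi Y = ps_sum p {..<k} (\<lambda>j. phi (ps_mul p d (psi (A j)) (zeta p d j)))"
    unfolding Y_def by (rule phi_sum)
  also have "\<dots> = ps_sum p {..<k} (\<lambda>j. ps_mul p d (A j) (take k Z ! j))"
  proof (rule ps_sum_cong)
    fix j assume "j \<in> {..<k}"
    then have j: "j < k" "j < d" using k by auto
    show "phi (ps_mul p d (psi (A j)) (zeta p d j)) = ps_mul p d (A j) (take k Z ! j)"
      using j A(1) by (simp add: phi_mul phi_psi phi_zeta)
  qed
  finally have "psi x = Y" using A(2) by (intro psi_eqI YP) simp
  moreover have "Y \<in> zideal p d k" unfolding zideal_def Y_def
    using A(1) by (auto intro!: exI[of _ "\<lambda>j. psi (A j)"] psi_PS)
  ultimately show "proj k (psi x) = ps_zero" using zker1[OF k] by simp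
next
  assume "proj k (psi x) = ps_zero"
  then have "psi x \<in> zideal p d k" by (rule zker2[OF p_pos k psi_PS[OF x]])
  then obtain A where A: "\<forall>j<k. A j \<in> PS p d" "psi x = ps_sum p {..<k} (\<lambda>j. ps_mul p d (A j) (zeta p d j))"
    by (auto simp: zideal_def)
  have "x = phi (psi x)" using phi_psi[OF x] by simp
  also have "\<dots> = ps_sum p {..<k} (\<lambda>j. phi (ps_mul p d (A j) (zeta p d j)))"
    using A(2) by (simp add: phi_sum)
  also have "\<dots> = ps_sum p {..<k} (\<lambda>j. ps_mul p d (phi (A j)) (take k Z ! j))"
  proof (rule ps_sum_cong)
    fix j assume "j \<in> {..<k}"
    then have j: "j < k" "j < d" using k by auto
    show "phi (ps_mul p d (A j) (zeta p d j)) = ps_mul p d (phi (A j)) (take k Z ! j)"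
      using j by (simp add: phi_mul phi_zeta)
  qed
  finally have xe: "x = ps_sum p {..<k} (\<lambda>j. ps_mul p d (phi (A j)) (take k Z ! j))" .
  have lt: "length (take k Z) = k" using k Zlen by simp
  show "x \<in> gen_ideal p d (take k Z)"
    unfolding gen_ideal_iff lt
  proof (intro exI[of _ "\<lambda>j. phi (A j)"] conjI)
    show "\<forall>j<k. phi (A j) \<in> PS p d" using A(1) phi_PS by blast
  qed (rule xe)
qed

end

lemma ps_sum_lessThan_Suc: "ps_sum p {..<Suc k} G = ps_add p (ps_sum p {..<k} G) (G k)"
proof (intro ext)
  fix a n
  have "(\<Sum>j<Suc k. G j a n) mod p ^ n = ((\<Sum>j<k. G j a n) mod p ^ n + G k a n) mod p ^ n"
    by (simp add: mod_add_left_eq)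
  then show "ps_sum p {..<Suc k} G a n = ps_add p (ps_sum p {..<k} G) (G k) a n"
    by (simp add: ps_sum_def ps_add_def)
qed

lemma gen_ideal_PS: assumes "p > 0" "set L \<subseteq> PS p d" shows "gen_ideal p d L \<subseteq> PS p d"
proof
  fix x assume "x \<in> gen_ideal p d L"
  then obtain A where A: "\<forall>j<length L. A j \<in> PS p d" "x = ps_sum p {..<length L} (\<lambda>j. ps_mul p d (A j) (L ! j))"
    by (auto simp: gen_ideal_iff)
  have "L ! j \<in> PS p d" if "j < length L" for j using assms(2) that nth_mem by blast
  then show "x \<in> PS p d" using A by (auto intro!: ps_sum_PS ps_mul_PS assms(1))
qed

lemma ps_mul_neg: "ps_mul p d F (ps_neg p G) = ps_neg p (ps_mul p d F G)"
proof (intro ext)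
  fix a n
  show "ps_mul p d F (ps_neg p G) a n = ps_neg p (ps_mul p d F G) a n"
  proof (cases "length a = d")
    case True
    have "ps_mul p d F (ps_neg p G) a n = (\<Sum>b\<in>below d a. F b n * ((- G (lsub a b) n) mod p ^ n)) mod p ^ n"
      using True unfolding ps_mul_eq cv_def ps_neg_def by simp
    also have "\<dots> = (\<Sum>b\<in>below d a. F b n * (- G (lsub a b) n)) mod p ^ n" by (rule sum_mod_mult_right)
    also have "\<dots> = (- cv d F G a n) mod p ^ n" by (simp add: cv_def sum_negf)
    also have "\<dots> = (- (cv d F G a n mod p ^ n)) mod p ^ n" by (rule mod_minus_eq[symmetric])
    also have "\<dots> = ps_neg p (ps_mul p d F G) a n" using True unfolding ps_neg_def ps_mul_eq by simp
    finally show ?thesis .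
  qed (simp add: ps_mul_eq ps_neg_def)
qed

lemma ps_neg_add: "ps_add p (ps_neg p F) F = ps_zero"
  using ps_add_neg[of p F] ps_add_comm[of p F] by simp

lemma ps_add_cancel: assumes "F \<in> PS p d" shows "ps_add p (ps_add p F (ps_neg p G)) G = F"
proof -
  have "ps_add p (ps_add p F (ps_neg p G)) G = ps_add p F (ps_add p (ps_neg p G) G)" by (rule ps_add_assoc)
  also have "\<dots> = F" using ps_add_zero[OF assms] by (simp add: ps_neg_add)
  finally show ?thesis .
qed

lemma ps_cancel: assumes p: "prime p" and a: "a \<in> PS p d" "a \<noteq> ps_zero" and b: "b \<in> PS p d" and c: "c \<in> PS p d"
  and e: "ps_mul p d a b = ps_mul p d a c"
  shows "b = c"
proof -
  have p0: "p > 0" using p by (simp add: prime_gt_0_int)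
  have "ps_mul p d a (ps_add p b (ps_neg p c)) = ps_add p (ps_mul p d a b) (ps_neg p (ps_mul p d a c))"
    by (simp add: ps_mul_distrib ps_mul_neg)
  also have "\<dots> = ps_zero" using e by (simp add: ps_add_neg)
  finally have "ps_add p b (ps_neg p c) = ps_zero"
    using ps_domain[OF p a(1) ps_add_PS[OF p0 b ps_neg_PS[OF p0 c]]] a(2) by blast
  then have "ps_add p (ps_add p b (ps_neg p c)) c = ps_add p ps_zero c" by simp
  then show ?thesis using ps_add_cancel[OF b] ps_zero_add[OF c] by simp
qed

lemma ps_one_const: "p > 1 \<Longrightarrow> ps_one p d (replicate d 0) 1 = 1"
  by (simp add: ps_one_def)

lemma not_unit_max: assumes p: "p > 1" and q: "q \<in> PSmax p d" and e: "e \<in> PS p d"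
  shows "ps_mul p d q e \<noteq> ps_one p d"
proof
  assume h: "ps_mul p d q e = ps_one p d"
  have "vv p d (ps_mul p d q e) (1 + 0)"
    by (rule vv_mul[OF PSmax_PS[OF q] e vv_max[OF q] vv_0[OF e]])
  then have "ps_mul p d q e (replicate d 0) 1 = 0" by (simp add: vv_def)
  then show False using h ps_one_const[OF p, of d] by simp
qed

lemma is_base_base: assumes "p > 0" "d \<ge> 1" "is_base p d B" shows "base p d B"
  using assms unfolding is_base_def by unfold_locales auto

locale keyl =
  fixes p :: int and d k :: nat and t W0 :: "pser list" and ZS :: "pser set"
  assumes p_prime: "prime p" and d1: "d \<ge> 1" and tlen: "length t = k"
    and B0: "is_base p d (t @ W0)"
    and ZSb: "\<And>z. z \<in> ZS \<Longrightarrow> \<exists>W. is_base p d (t @ [z] @ W)"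
begin

lemma p0: "p > 0" using p_prime by (simp add: prime_gt_0_int)
lemma p1: "p > 1" using p_prime by (simp add: prime_gt_1_int)

sublocale B: base p d "t @ W0" by (rule is_base_base[OF p0 d1 B0])

lemma kd: "k \<le> d" using B.Zlen tlen by simp
lemma take0: "take k (t @ W0) = t" using tlen by simp
lemma tPS: "set t \<subseteq> PS p d" using B.ZPS by auto

definition I :: "pser \<Rightarrow> pser set" where "I z = gen_ideal p d (t @ [z])"
definition qz :: "pser \<Rightarrow> pser" where "qz z = proj k (B.psi z)"

lemma zmax: "z \<in> ZS \<Longrightarrow> z \<in> PSmax p d"
  using ZSb[of z] by (auto simp: is_base_def)

lemma zPS: "z \<in> ZS \<Longrightarrow> z \<in> PS p d" using zmax PSmax_PS by blast

lemma I_PS: "z \<in> ZS \<Longrightarrow> I z \<subseteq> PS p d"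
  unfolding I_def by (rule gen_ideal_PS[OF p0]) (use tPS zPS in auto)

lemma qz_PS: "z \<in> ZS \<Longrightarrow> qz z \<in> PS p d"
  unfolding qz_def by (intro proj_PS p0 B.psi_PS zPS)

lemma qz_proj: "proj k (qz z) = qz z" unfolding qz_def by (rule proj_idem)

lemma qz_max: "z \<in> ZS \<Longrightarrow> qz z \<in> PSmax p d"
proof -
  assume z: "z \<in> ZS"
  have "qz z (replicate d 0) 1 = z (replicate d 0) 1"
    unfolding qz_def using proj_const[OF kd] B.psi_const[OF zPS[OF z]] by simp
  also have "\<dots> = 0" using zmax[OF z] by (simp add: PSmax_def)
  finally show ?thesis using qz_PS[OF z] by (simp add: PSmax_def)
qed

lemma gen_t: "x \<in> gen_ideal p d t \<longleftrightarrow> (\<exists>A. (\<forall>j<k. A j \<in> PS p d) \<and> x = ps_sum p {..<k} (\<lambda>j. ps_mul p d (A j) (t ! j)))"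
  using gen_ideal_iff[of x p d t] tlen by simp

lemma gen_tz: "x \<in> I z \<longleftrightarrow> (\<exists>A. (\<forall>j<Suc k. A j \<in> PS p d) \<and>
     x = ps_add p (ps_sum p {..<k} (\<lambda>j. ps_mul p d (A j) (t ! j))) (ps_mul p d (A k) z))"
proof -
  have "ps_sum p {..<Suc k} (\<lambda>j. ps_mul p d (A j) ((t @ [z]) ! j)) =
        ps_add p (ps_sum p {..<k} (\<lambda>j. ps_mul p d (A j) (t ! j))) (ps_mul p d (A k) z)" for A
  proof -
    have "ps_sum p {..<k} (\<lambda>j. ps_mul p d (A j) ((t @ [z]) ! j)) = ps_sum p {..<k} (\<lambda>j. ps_mul p d (A j) (t ! j))"
      by (rule ps_sum_cong) (simp add: nth_append tlen)
    then show ?thesis unfolding ps_sum_lessThan_Suc using tlen by (simp add: nth_append)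
  qed
  then show ?thesis unfolding I_def gen_ideal_iff using tlen by simp
qed

end

context keyl
begin

lemma char: assumes z: "z \<in> ZS" and x: "x \<in> PS p d"
  shows "x \<in> I z \<longleftrightarrow> (\<exists>c\<in>PS p d. proj k (B.psi x) = ps_mul p d (qz z) c)"
proof
  assume "x \<in> I z"
  then obtain A where A: "\<forall>j<Suc k. A j \<in> PS p d"
    "x = ps_add p (ps_sum p {..<k} (\<lambda>j. ps_mul p d (A j) (t ! j))) (ps_mul p d (A k) z)"
    unfolding gen_tz by blast
  define g where "g = ps_sum p {..<k} (\<lambda>j. ps_mul p d (A j) (t ! j))"
  have gI: "g \<in> gen_ideal p d t" unfolding gen_t g_def
  proof (intro exI[of _ A] conjI)
    show "\<forall>j<k. A j \<in> PS p d" using A(1) by auto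
  qed (rule refl)
  have gP: "g \<in> PS p d" using gI gen_ideal_PS[OF p0 tPS] by blast
  have Ak: "A k \<in> PS p d" using A(1) by simp
  have mP: "ps_mul p d (A k) z \<in> PS p d" by (rule ps_mul_PS[OF p0 Ak zPS[OF z]])
  have pg: "proj k (B.psi g) = ps_zero" using B.transport[OF kd gP] gI take0 by simp
  have "B.psi x = ps_add p (B.psi g) (ps_mul p d (B.psi (A k)) (B.psi z))"
    using A(2) by (simp add: g_def[symmetric] B.psi_add gP mP B.psi_mul Ak zPS[OF z])
  then have "proj k (B.psi x) = ps_add p ps_zero (ps_mul p d (proj k (B.psi (A k))) (qz z))"
    by (simp add: proj_add proj_mul kd pg qz_def)
  also have "\<dots> = ps_mul p d (qz z) (proj k (B.psi (A k)))"
    by (subst ps_zero_add) (auto intro!: ps_mul_PS p0 proj_PS B.psi_PS Ak qz_PS z simp: ps_mul_comm)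
  finally show "\<exists>c\<in>PS p d. proj k (B.psi x) = ps_mul p d (qz z) c"
    using proj_PS[OF p0 B.psi_PS[OF Ak]] by blast
next
  assume "\<exists>c\<in>PS p d. proj k (B.psi x) = ps_mul p d (qz z) c"
  then obtain c where c: "c \<in> PS p d" "proj k (B.psi x) = ps_mul p d (qz z) c" by blast
  define c1 where "c1 = proj k c"
  have c1P: "c1 \<in> PS p d" unfolding c1_def by (rule proj_PS[OF p0 c(1)])
  have h1: "proj k (B.psi x) = ps_mul p d (qz z) c1"
  proof -
    have "proj k (B.psi x) = proj k (proj k (B.psi x))" by (simp add: proj_idem)
    also have "\<dots> = ps_mul p d (qz z) c1" using c(2) by (simp add: proj_mul kd qz_proj c1_def)
    finally show ?thesis .
  qed
  define z' where "z' = B.psi z"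
  have z'P: "z' \<in> PS p d" unfolding z'_def by (rule B.psi_PS[OF zPS[OF z]])
  have psx: "B.psi x \<in> PS p d" by (rule B.psi_PS[OF x])
  define g' where "g' = ps_add p (B.psi x) (ps_neg p (ps_mul p d c1 z'))"
  have g'P: "g' \<in> PS p d" unfolding g'_def
    by (intro ps_add_PS ps_neg_PS ps_mul_PS p0 psx c1P z'P)
  have pg': "proj k g' = ps_zero"
  proof -
    have "proj k g' = ps_add p (ps_mul p d (qz z) c1) (ps_neg p (ps_mul p d c1 (qz z)))"
      unfolding g'_def by (simp add: proj_add proj_neg proj_mul kd h1 c1_def proj_idem qz_def z'_def)
    also have "\<dots> = ps_zero" by (simp add: ps_mul_comm[of p d c1] ps_add_neg)
    finally show ?thesis .
  qed
  define G where "G = subst p d g' (t @ W0)"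
  have GP: "G \<in> PS p d" unfolding G_def by (rule B.phi_PS[OF g'P])
  have "proj k (B.psi G) = ps_zero" unfolding G_def using B.psi_phi[OF g'P] pg' by simp
  then have "G \<in> gen_ideal p d t" using B.transport[OF kd GP] take0 by simp
  then obtain A where A: "\<forall>j<k. A j \<in> PS p d" "G = ps_sum p {..<k} (\<lambda>j. ps_mul p d (A j) (t ! j))"
    unfolding gen_t by blast
  have "B.psi x = ps_add p g' (ps_mul p d c1 z')"
    unfolding g'_def by (rule ps_add_cancel[OF psx, symmetric])
  then have "x = subst p d (ps_add p g' (ps_mul p d c1 z')) (t @ W0)"
    using B.phi_psi[OF x] by simp
  also have "\<dots> = ps_add p G (ps_mul p d (subst p d c1 (t @ W0)) z)"
    by (simp add: B.phi_add B.phi_mul G_def z'_def B.phi_psi zPS[OF z])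
  finally have xe: "x = ps_add p G (ps_mul p d (subst p d c1 (t @ W0)) z)" .
  define A' where "A' = A(k := subst p d c1 (t @ W0))"
  have "ps_sum p {..<k} (\<lambda>j. ps_mul p d (A' j) (t ! j)) = G"
    unfolding A(2) A'_def by (rule ps_sum_cong) simp
  then have "x = ps_add p (ps_sum p {..<k} (\<lambda>j. ps_mul p d (A' j) (t ! j))) (ps_mul p d (A' k) z)"
    using xe by (simp add: A'_def)
  moreover have "\<forall>j<Suc k. A' j \<in> PS p d" using A(1) B.phi_PS[OF c1P] by (auto simp: A'_def less_Suc_eq)
  ultimately show "x \<in> I z" unfolding gen_tz by blast
qed

lemma Iprime: assumes z: "z \<in> ZS" and x: "x \<in> PS p d" and y: "y \<in> PS p d"
  and xy: "ps_mul p d x y \<in> I z"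
  shows "x \<in> I z \<or> y \<in> I z"
proof -
  obtain W where W: "is_base p d (t @ [z] @ W)" using ZSb[OF z] by blast
  interpret Bz: base p d "t @ [z] @ W" by (rule is_base_base[OF p0 d1 W])
  have sk: "Suc k \<le> d" using Bz.Zlen tlen by simp
  have tk: "take (Suc k) (t @ [z] @ W) = t @ [z]" using tlen by simp
  have xyP: "ps_mul p d x y \<in> PS p d" by (rule ps_mul_PS[OF p0 x y])
  have "proj (Suc k) (Bz.psi (ps_mul p d x y)) = ps_zero"
    using Bz.transport[OF sk xyP] xy tk by (simp add: I_def)
  then have "ps_mul p d (proj (Suc k) (Bz.psi x)) (proj (Suc k) (Bz.psi y)) = ps_zero"
    unfolding Bz.psi_mul[OF x y] proj_mul[OF sk] .
  then have "proj (Suc k) (Bz.psi x) = ps_zero \<or> proj (Suc k) (Bz.psi y) = ps_zero"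
    by (rule ps_domain[OF p_prime proj_PS[OF p0 Bz.psi_PS[OF x]] proj_PS[OF p0 Bz.psi_PS[OF y]]])
  then show ?thesis
    using Bz.transport[OF sk x] Bz.transport[OF sk y] tk by (auto simp: I_def)
qed

end

context keyl
begin

definition dv :: "pser \<Rightarrow> pser \<Rightarrow> bool" where
  "dv u v \<longleftrightarrow> (\<exists>c\<in>PS p d. v = ps_mul p d u c)"

lemma char_dv: "z \<in> ZS \<Longrightarrow> x \<in> PS p d \<Longrightarrow> x \<in> I z \<longleftrightarrow> dv (qz z) (proj k (B.psi x))"
  using char by (simp add: dv_def)

lemma dv_refl: "u \<in> PS p d \<Longrightarrow> dv u u"
  unfolding dv_def using ps_mul_one[of u p d] ps_one_PS[OF p0] by metis

lemma dv_trans: assumes "dv u v" "dv v w" shows "dv u w"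
proof -
  obtain c where c: "c \<in> PS p d" "v = ps_mul p d u c" using assms(1) by (auto simp: dv_def)
  obtain e where e: "e \<in> PS p d" "w = ps_mul p d v e" using assms(2) by (auto simp: dv_def)
  have "w = ps_mul p d u (ps_mul p d c e)" using c e by (simp add: ps_mul_assoc)
  then show ?thesis unfolding dv_def using ps_mul_PS[OF p0 c(1) e(1)] by blast
qed

lemma dv_S: assumes "dv u v" "proj k u = u" "proj k v = v"
  shows "\<exists>c. c \<in> PS p d \<and> proj k c = c \<and> v = ps_mul p d u c"
proof -
  obtain c where c: "c \<in> PS p d" "v = ps_mul p d u c" using assms(1) by (auto simp: dv_def)
  have "v = proj k v" using assms(3) by simp
  also have "\<dots> = ps_mul p d u (proj k c)" using c(2) assms(2) by (simp add: proj_mul kd)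
  finally show ?thesis using proj_PS[OF p0 c(1)] proj_idem by blast
qed

lemma qprime: assumes z: "z \<in> ZS" and a: "a \<in> PS p d" "proj k a = a" and b: "b \<in> PS p d" "proj k b = b"
  and h: "dv (qz z) (ps_mul p d a b)"
  shows "dv (qz z) a \<or> dv (qz z) b"
proof -
  define x where "x = subst p d a (t @ W0)"
  define y where "y = subst p d b (t @ W0)"
  have xP: "x \<in> PS p d" and yP: "y \<in> PS p d" unfolding x_def y_def using B.phi_PS a b by auto
  have px: "B.psi x = a" and py: "B.psi y = b" unfolding x_def y_def using B.psi_phi a b by auto
  have "proj k (B.psi (ps_mul p d x y)) = ps_mul p d a b"
    using B.psi_mul[OF xP yP] px py a(2) b(2) by (simp add: proj_mul kd)
  then have "ps_mul p d x y \<in> I z" using char_dv[OF z ps_mul_PS[OF p0 xP yP]] h by simp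
  then have "x \<in> I z \<or> y \<in> I z" by (rule Iprime[OF z xP yP])
  then show ?thesis using char_dv[OF z xP] char_dv[OF z yP] px py a(2) b(2) by auto
qed

lemma I_eq: assumes z: "z \<in> ZS" and w: "w \<in> ZS" and "dv (qz z) (qz w)" "dv (qz w) (qz z)"
  shows "I z = I w"
proof -
  have sub: "I z1 \<subseteq> I w1" if z1: "z1 \<in> ZS" and w1: "w1 \<in> ZS" and d1: "dv (qz w1) (qz z1)" for z1 w1
  proof
    fix x assume x: "x \<in> I z1"
    have xP: "x \<in> PS p d" using x I_PS[OF z1] by blast
    have "dv (qz z1) (proj k (B.psi x))" using x char_dv[OF z1 xP] by simp
    then have "dv (qz w1) (proj k (B.psi x))" using dv_trans[OF d1] by blast
    then show "x \<in> I w1" using char_dv[OF w1 xP] by simp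
  qed
  show ?thesis using sub[OF z w] sub[OF w z] assms by blast
qed

lemma zero_I: assumes "z \<in> ZS" "w \<in> ZS" "qz z = ps_zero" "qz w = ps_zero" shows "I z = I w"
  by (rule I_eq) (use assms ps_zero_PS[OF p0] in \<open>auto simp: dv_def ps_mul_comm[of p d ps_zero] ps_mul_zero\<close>)

lemma nodiv: assumes z: "z \<in> ZS" and w: "w \<in> ZS" and ne: "I z \<noteq> I w" and nz: "qz w \<noteq> ps_zero"
  shows "\<not> dv (qz z) (qz w)"
proof
  assume h: "dv (qz z) (qz w)"
  obtain c where c: "c \<in> PS p d" "proj k c = c" "qz w = ps_mul p d (qz z) c"
    using dv_S[OF h qz_proj qz_proj] by blast
  have "dv (qz w) (ps_mul p d (qz z) c)" using c(3) dv_refl[OF qz_PS[OF w]] by simp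
  then have "dv (qz w) (qz z) \<or> dv (qz w) c"
    by (rule qprime[OF w qz_PS[OF z] qz_proj c(1,2)])
  then show False
  proof
    assume "dv (qz w) (qz z)"
    then have "I z = I w" using I_eq[OF z w h] by simp
    then show False using ne by simp
  next
    assume "dv (qz w) c"
    then obtain e where e: "e \<in> PS p d" "c = ps_mul p d (qz w) e" by (auto simp: dv_def)
    have "ps_mul p d (qz w) (ps_one p d) = ps_mul p d (qz w) (ps_mul p d (qz z) e)"
      using c(3) e(2) ps_mul_one[OF qz_PS[OF w]] by (simp add: ps_mul_lcomm)
    then have "ps_one p d = ps_mul p d (qz z) e"
      by (rule ps_cancel[OF p_prime qz_PS[OF w] nz ps_one_PS[OF p0] ps_mul_PS[OF p0 qz_PS[OF z] e(1)]])
    then show False using not_unit_max[OF p1 qz_max[OF z] e(1)] by simp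
  qed
qed

definition prodq :: "pser list \<Rightarrow> pser" where
  "prodq L = foldr (\<lambda>z acc. ps_mul p d (qz z) acc) L (ps_one p d)"

lemma prodq_props: "set L \<subseteq> ZS \<Longrightarrow> prodq L \<in> PS p d \<and> proj k (prodq L) = prodq L \<and> vv p d (prodq L) (length L)"
proof (induction L)
  case Nil then show ?case by (simp add: prodq_def ps_one_PS p0 proj_one kd vv_0)
next
  case (Cons z L)
  then have z: "z \<in> ZS" and IH: "prodq L \<in> PS p d" "proj k (prodq L) = prodq L" "vv p d (prodq L) (length L)" by auto
  have e: "prodq (z # L) = ps_mul p d (qz z) (prodq L)" by (simp add: prodq_def)
  show ?case unfolding e
    using ps_mul_PS[OF p0 qz_PS[OF z] IH(1)] IH(2) qz_proj[of z] vv_mul[OF qz_PS[OF z] IH(1) vv_max[OF qz_max[OF z]] IH(3)]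
    by (simp add: proj_mul kd)
qed

lemma listdiv: assumes z: "z \<in> ZS" and "set L \<subseteq> ZS" and "\<forall>w\<in>set L. \<not> dv (qz z) (qz w)"
  and "h \<in> PS p d" "proj k h = h" and "dv (qz z) (ps_mul p d (prodq L) h)"
  shows "dv (qz z) h"
  using assms(2-)
proof (induction L)
  case Nil then show ?case using ps_one_mul[OF Nil(3)] by (simp add: prodq_def)
next
  case (Cons w L)
  have w: "w \<in> ZS" and L: "set L \<subseteq> ZS" using Cons by auto
  have PL: "prodq L \<in> PS p d" "proj k (prodq L) = prodq L" using prodq_props[OF L] by auto
  have "ps_mul p d (prodq (w # L)) h = ps_mul p d (qz w) (ps_mul p d (prodq L) h)"
    by (simp add: prodq_def ps_mul_assoc)
  then have "dv (qz z) (ps_mul p d (qz w) (ps_mul p d (prodq L) h))" using Cons.prems by simp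
  moreover have "proj k (ps_mul p d (prodq L) h) = ps_mul p d (prodq L) h"
    by (simp add: proj_mul kd PL Cons.prems(4))
  ultimately have "dv (qz z) (qz w) \<or> dv (qz z) (ps_mul p d (prodq L) h)"
    using qprime[OF z qz_PS[OF w] qz_proj ps_mul_PS[OF p0 PL(1) Cons.prems(3)]] by blast
  then show ?case using Cons by auto
qed

end

context keyl
begin

lemma claim: assumes hyp: "\<forall>z\<in>ZS. dv (qz z) g0" and g0: "g0 \<in> PS p d" "proj k g0 = g0"
  and inf: "infinite (I ` ZS)"
  shows "\<exists>L h. length L = m \<and> set L \<subseteq> ZS \<and> (\<forall>w\<in>set L. qz w \<noteq> ps_zero) \<and>
               h \<in> PS p d \<and> proj k h = h \<and> g0 = ps_mul p d (prodq L) h"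
proof (induction m)
  case 0
  show ?case
    by (rule exI[of _ "[]"], rule exI[of _ g0]) (simp add: g0 prodq_def ps_one_mul)
next
  case (Suc m)
  then obtain L h where Lh: "length L = m" "set L \<subseteq> ZS" "\<forall>w\<in>set L. qz w \<noteq> ps_zero"
    "h \<in> PS p d" "proj k h = h" "g0 = ps_mul p d (prodq L) h" by blast
  have "\<exists>z\<in>ZS. I z \<notin> I ` set L \<and> qz z \<noteq> ps_zero"
  proof (rule ccontr)
    assume nz: "\<not> (\<exists>z\<in>ZS. I z \<notin> I ` set L \<and> qz z \<noteq> ps_zero)"
    let ?Z0 = "{z\<in>ZS. qz z = ps_zero}"
    have "finite (I ` ?Z0)"
    proof (cases "?Z0 = {}")
      case False
      then obtain z0 where z0: "z0 \<in> ?Z0" by blast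
      have "I ` ?Z0 \<subseteq> {I z0}" using zero_I z0 by auto
      then show ?thesis by (rule finite_subset) simp
    next
      case True
      then have e: "I ` ?Z0 = {}" by blast
      show ?thesis by (subst e) (rule finite.emptyI)
    qed
    then have "finite (I ` set L \<union> I ` ?Z0)" by simp
    moreover have "I ` ZS \<subseteq> I ` set L \<union> I ` ?Z0" using nz by auto
    ultimately have "finite (I ` ZS)" using finite_subset by blast
    then show False using inf by simp
  qed
  then obtain z where z: "z \<in> ZS" "I z \<notin> I ` set L" "qz z \<noteq> ps_zero" by blast
  have nd: "\<forall>w\<in>set L. \<not> dv (qz z) (qz w)"
  proof
    fix w assume w: "w \<in> set L"
    have "I z \<noteq> I w" using z(2) w by auto
    then show "\<not> dv (qz z) (qz w)" using nodiv[OF z(1)] w Lh(2,3) by auto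
  qed
  have "dv (qz z) (ps_mul p d (prodq L) h)" using hyp z(1) Lh(6) by simp
  then have "dv (qz z) h" by (rule listdiv[OF z(1) Lh(2) nd Lh(4,5)])
  then obtain c where c: "c \<in> PS p d" "proj k c = c" "h = ps_mul p d (qz z) c"
    using dv_S[OF _ qz_proj Lh(5)] by blast
  have "g0 = ps_mul p d (prodq (z # L)) c"
    using Lh(6) c(3) by (simp add: prodq_def ps_mul_assoc ps_mul_lcomm)
  then show ?case using Lh z c by (intro exI[of _ "z # L"] exI[of _ c]) auto
qed

theorem key: assumes inf: "infinite (I ` ZS)" and f: "\<forall>z\<in>ZS. f \<in> I z"
  shows "f \<in> gen_ideal p d t"
proof -
  have "ZS \<noteq> {}" using inf by auto
  then obtain z0 where z0: "z0 \<in> ZS" by blast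
  have fP: "f \<in> PS p d" using f z0 I_PS[OF z0] by blast
  define g0 where "g0 = proj k (B.psi f)"
  have g0P: "g0 \<in> PS p d" unfolding g0_def by (rule proj_PS[OF p0 B.psi_PS[OF fP]])
  have g0p: "proj k g0 = g0" unfolding g0_def by (rule proj_idem)
  have hyp: "\<forall>z\<in>ZS. dv (qz z) g0"
  proof
    fix z assume z: "z \<in> ZS"
    show "dv (qz z) g0" using char_dv[OF z fP] f z unfolding g0_def by simp
  qed
  have "vv p d g0 m" for m
  proof -
    obtain L h where Lh: "length L = m" "set L \<subseteq> ZS" "h \<in> PS p d" "g0 = ps_mul p d (prodq L) h"
      using claim[OF hyp g0P g0p inf, of m] by blast
    have P: "prodq L \<in> PS p d" "vv p d (prodq L) m" using prodq_props[OF Lh(2)] Lh(1) by auto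
    have "vv p d (ps_mul p d (prodq L) h) (m + 0)" by (rule vv_mul[OF P(1) Lh(3) P(2) vv_0[OF Lh(3)]])
    then show ?thesis using Lh(4) by simp
  qed
  then have "g0 = ps_zero" by (rule vv_all[OF g0P])
  then show ?thesis using B.transport[OF kd fP] take0 g0_def by simp
qed

end

lemma zero_in_gen_ideal: assumes "p > 0" shows "ps_zero \<in> gen_ideal p d L"
proof -
  have m: "ps_mul p d ps_zero G = ps_zero" for G
    using ps_mul_zero[of p d G] ps_mul_comm[of p d G ps_zero] by simp
  have "ps_zero = ps_sum p {..<length L} (\<lambda>j. ps_mul p d ps_zero (L ! j))"
    unfolding m by (rule ps_sum_zero[symmetric])
  then show ?thesis unfolding gen_ideal_iff using ps_zero_PS[OF assms]
    by (intro exI[of _ "\<lambda>j. ps_zero"]) auto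
qed

lemma gen_ideal_Nil: "gen_ideal p d [] = {ps_zero}"
  by (auto simp: gen_ideal_iff ps_sum_empty)

context keyl
begin

lemma k0_inj: assumes k0: "k = 0" and z: "z \<in> ZS" and w: "w \<in> ZS" and e: "I z = I w"
  shows "z = w \<or> ps_associated p d z w"
proof -
  have pj: "proj k F = F" for F using k0 by (simp add: proj_0)
  have zP: "z \<in> PS p d" and wP: "w \<in> PS p d" using zPS z w by auto
  have self: "x \<in> I x" if x: "x \<in> ZS" for x
  proof -
    have "B.psi x = ps_mul p d (qz x) (ps_one p d)"
      using ps_mul_one[OF B.psi_PS[OF zPS[OF x]]] by (simp add: qz_def pj)
    then show ?thesis using char[OF x zPS[OF x]] ps_one_PS[OF p0] pj by auto
  qed
  have "z \<in> I w" using self[OF z] e by simp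
  then obtain c where c: "c \<in> PS p d" "B.psi z = ps_mul p d (B.psi w) c"
    using char[OF w zP] by (auto simp: qz_def pj)
  have "w \<in> I z" using self[OF w] e by simp
  then obtain c' where c': "c' \<in> PS p d" "B.psi w = ps_mul p d (B.psi z) c'"
    using char[OF z wP] by (auto simp: qz_def pj)
  show ?thesis
  proof (cases "B.psi z = ps_zero")
    case True
    then have "B.psi w = ps_zero" using c' ps_mul_zero[of p d c'] ps_mul_comm[of p d ps_zero c'] by simp
    then have "B.psi z = B.psi w" using True by simp
    then have "z = w" using B.phi_psi[OF zP] B.phi_psi[OF wP] by metis
    then show ?thesis by simp
  next
    case False
    have "ps_mul p d (B.psi z) (ps_one p d) = ps_mul p d (B.psi z) (ps_mul p d c' c)"
      using c(2) c'(2) ps_mul_one[OF B.psi_PS[OF zP]] by (simp add: ps_mul_assoc)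
    then have one: "ps_one p d = ps_mul p d c' c"
      by (rule ps_cancel[OF p_prime B.psi_PS[OF zP] False ps_one_PS[OF p0] ps_mul_PS[OF p0 c'(1) c(1)]])
    define u where "u = subst p d c (t @ W0)"
    have uP: "u \<in> PS p d" unfolding u_def by (rule B.phi_PS[OF c(1)])
    have "z = subst p d (B.psi z) (t @ W0)" using B.phi_psi[OF zP] by simp
    also have "\<dots> = ps_mul p d u w" using c(2) B.phi_psi[OF wP]
      by (simp add: B.phi_mul u_def ps_mul_comm[of p d w])
    finally have zu: "z = ps_mul p d u w" .
    have "ps_mul p d u (subst p d c' (t @ W0)) = ps_one p d"
      unfolding u_def B.phi_mul[symmetric] using one B.phi_one by (simp add: ps_mul_comm[of p d c])
    then have "ps_unit p d u" unfolding ps_unit_def using uP B.phi_PS[OF c'(1)] by blast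
    then show ?thesis using zu by (auto simp: ps_associated_def)
  qed
qed

end

theorem lemma6:
  fixes p :: int and d :: nat and X :: "nat \<Rightarrow> pser list set"
  assumes "prime p" and "d \<ge> 2"
    and "\<And>i. 1 \<le> i \<Longrightarrow> i < d \<Longrightarrow> X i \<subseteq> Bi p d i"
    and "rich p d X"
  shows "\<forall>i. 1 \<le> i \<and> i < d \<longrightarrow> (\<Inter>t\<in>X i. gen_ideal p d t) = {ps_zero}"
proof -
  have p0: "p > 0" using assms(1) by (simp add: prime_gt_0_int)
  have d1: "d \<ge> 1" using assms(2) by simp
  obtain S where S: "infinite S" "S \<subseteq> {z. [z] \<in> X 1}" "\<forall>a\<in>S. \<forall>b\<in>S. a \<noteq> b \<longrightarrow> \<not> ps_associated p d a b"
    using assms(4) by (auto simp: rich_def)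
  have R2: "\<And>i t. 1 < i \<Longrightarrow> i < d \<Longrightarrow> t \<in> X (i - 1) \<Longrightarrow> infinite {gen_ideal p d (t @ [z]) | z. t @ [z] \<in> X i}"
    using assms(4) by (auto simp: rich_def)
  have main: "\<forall>f. (\<forall>t\<in>X i. f \<in> gen_ideal p d t) \<longrightarrow> f = ps_zero" if "1 \<le> i" "i < d" for i
    using that
  proof (induction i)
    case 0 then show ?case by simp
  next
    case (Suc k)
    show ?case
    proof (intro allI impI)
      fix f assume f: "\<forall>t\<in>X (Suc k). f \<in> gen_ideal p d t"
      show "f = ps_zero"
      proof (cases k)
        case 0
        have X1: "X 1 \<subseteq> Bi p d 1" using assms(3)[of 1] assms(2) by simp
        obtain z0 where z0: "z0 \<in> S" using S(1) by (metis ex_in_conv finite.emptyI)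
        then have "[z0] \<in> Bi p d 1" using S(2) X1 by auto
        then obtain W where W: "is_base p d ([z0] @ W)" by (auto simp: Bi_def)
        have ZSb: "\<exists>W. is_base p d ([] @ [z] @ W)" if "z \<in> S" for z
        proof -
          have "[z] \<in> Bi p d 1" using that S(2) X1 by auto
          then show ?thesis by (simp add: Bi_def)
        qed
        interpret K: keyl p d 0 "[]" "[z0] @ W" S
          by unfold_locales (use assms(1) d1 W ZSb in auto)
        have "inj_on K.I S"
        proof (rule inj_onI)
          fix z w assume "z \<in> S" "w \<in> S" "K.I z = K.I w"
          then show "z = w" using K.k0_inj[OF refl] S(3) by blast
        qed
        then have inf: "infinite (K.I ` S)" using S(1) finite_imageD by blast
        have "\<forall>z\<in>S. f \<in> K.I z" using f S(2) 0 by (auto simp: K.I_def)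
        then have "f \<in> gen_ideal p d []" by (rule K.key[OF inf])
        then show ?thesis by (simp add: gen_ideal_Nil)
      next
        case (Suc k')
        then have k1: "1 \<le> k" "k < d" using Suc.prems by auto
        have "\<forall>t\<in>X k. f \<in> gen_ideal p d t"
        proof
          fix t assume t: "t \<in> X k"
          have tB: "t \<in> Bi p d k" using assms(3)[OF k1] t by auto
          then obtain W0 where W0: "is_base p d (t @ W0)" and tl: "length t = k" by (auto simp: Bi_def)
          define ZS where "ZS = {z. t @ [z] \<in> X (Suc k)}"
          have XS: "X (Suc k) \<subseteq> Bi p d (Suc k)" using assms(3)[of "Suc k"] Suc.prems by simp
          have ZSb: "\<exists>W. is_base p d (t @ [z] @ W)" if "z \<in> ZS" for z
          proof -
            have "t @ [z] \<in> Bi p d (Suc k)" using that XS by (auto simp: ZS_def)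
            then obtain W where "is_base p d ((t @ [z]) @ W)" by (auto simp: Bi_def)
            then show ?thesis by auto
          qed
          interpret K: keyl p d k t W0 ZS
            by unfold_locales (use assms(1) d1 W0 tl ZSb in auto)
          have "{gen_ideal p d (t @ [z]) | z. t @ [z] \<in> X (Suc k)} = K.I ` ZS"
            by (auto simp: K.I_def ZS_def)
          moreover have "infinite {gen_ideal p d (t @ [z]) | z. t @ [z] \<in> X (Suc k)}"
            using R2[of "Suc k" t] Suc.prems t k1 by simp
          ultimately have inf: "infinite (K.I ` ZS)" by simp
          have "\<forall>z\<in>ZS. f \<in> K.I z" using f by (auto simp: K.I_def ZS_def)
          then show "f \<in> gen_ideal p d t" by (rule K.key[OF inf])
        qed
        then show ?thesis using Suc.IH k1 by blast
      qed
    qed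
  qed
  show ?thesis
  proof (intro allI impI)
    fix i assume i: "1 \<le> i \<and> i < d"
    show "(\<Inter>t\<in>X i. gen_ideal p d t) = {ps_zero}"
    proof
      show "(\<Inter>t\<in>X i. gen_ideal p d t) \<subseteq> {ps_zero}" using main[of i] i by blast
      show "{ps_zero} \<subseteq> (\<Inter>t\<in>X i. gen_ideal p d t)" using zero_in_gen_ideal[OF p0] by blast
    qed
  qed
qed

end
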